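(* In the setting described in the context, let $\sigma_w,\sigma_v$ be real scalars and let $\Pi_\tau(s)=W^{1/2}\tilde\Sigma_\tau(s)$, where $$\tilde\Sigma_\tau(s)=R^T\big(sI+L_{e,s}^\tau RWR^T\big)^{-1}\begin{bmatrix}\sigma_wD_\tau^TE^{-1/2} & -\sigma_vL_{e,s}^\tau RW^{1/2}\end{bmatrix}.$$ Then $\|\Pi_\tau\|_\infty^2=\bar\sigma(\sigma_w^2X+\sigma_v^2Y)$, where $$X=W^{1/2}R^T\big(RWR^TL_{e,s}^\tau RWR^T\big)^{-1}RW^{1/2},\qquad Y=W^{1/2}R^T\big(RWR^T\big)^{-1}RW^{1/2}.$$
   Context: Let $\mathcal G$ be an undirected, connected graph without self-loops, with node set $\{1,\dots,n\}$ ($n\ge2$) and edge set $\mathcal E$, $m=|\mathcal E|$. Give each edge an arbitrary orientation; the incidence matrix $D\in\mathbb R^{n\times m}$ has $D_{il}=1$ if node $i$ is the initial node of edge $l$, $-1$ if it is the terminal node, and $0$ otherwise. Fix a spanning tree $\mathcal G_\tau$ and order the edges so the first $n-1$ are tree edges; write $D=[D_\tau\ D_c]$ with $D_\tau\in\mathbb R^{n\times(n-1)}$. Set $T_\tau^c=(D_\tau^TD_\tau)^{-1}D_\tau^TD_c$ and $R=[I_{n-1}\ T_\tau^c]\in\mathbb R^{(n-1)\times m}$. Let $W=\mathrm{diag}(w_1,\dots,w_m)$, $w_l>0$, and $E=\mathrm{diag}(\epsilon_1,\dots,\epsilon_n)$, $\epsilon_i>0$; powers of these diagonal matrices are taken entrywise.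 Define $L_{e,s}^\tau=D_\tau^TE^{-1}D_\tau$. For a stable transfer matrix $\Phi(s)$, $\|\Phi\|_\infty=\sup_{\omega\in\mathbb R}\bar\sigma(\Phi(j\omega))$ where $\bar\sigma$ is the largest singular value. *)

theory Defs
  imports "HOL-Analysis.Analysis" "Jordan_Normal_Form.Matrix" "Jordan_Normal_Form.Char_Poly"
begin

(* Graph on nodes 0..<n with m oriented edges l<m: initial node src l, terminal node tgt l.
   (Node i of the paper corresponds to i-1 here; edge l of the paper to l-1.) *)

definition simple_graph :: "nat \<Rightarrow> nat \<Rightarrow> (nat \<Rightarrow> nat) \<Rightarrow> (nat \<Rightarrow> nat) \<Rightarrow> bool" where
  "simple_graph n m src tgt \<longleftrightarrow>
     (\<forall>l<m. src l < n \<and> tgt l < n \<and> src l \<noteq> tgt l) \<and>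
     (\<forall>l<m. \<forall>l'<m. l \<noteq> l' \<longrightarrow> {src l, tgt l} \<noteq> {src l', tgt l'})"

definition adj_in :: "nat set \<Rightarrow> (nat \<Rightarrow> nat) \<Rightarrow> (nat \<Rightarrow> nat) \<Rightarrow> nat \<Rightarrow> nat \<Rightarrow> bool" where
  "adj_in F src tgt i j \<longleftrightarrow> (\<exists>l\<in>F. (src l = i \<and> tgt l = j) \<or> (src l = j \<and> tgt l = i))"

definition connected_on :: "nat \<Rightarrow> nat set \<Rightarrow> (nat \<Rightarrow> nat) \<Rightarrow> (nat \<Rightarrow> nat) \<Rightarrow> bool" where
  "connected_on n F src tgt \<longleftrightarrow> (\<forall>i<n. \<forall>j<n. (adj_in F src tgt)\<^sup>*\<^sup>* i j)"

definition spanning_tree :: "nat \<Rightarrow> nat set \<Rightarrow> (nat \<Rightarrow> nat) \<Rightarrow> (nat \<Rightarrow> nat) \<Rightarrow> bool" where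
  "spanning_tree n F src tgt \<longleftrightarrow>
     connected_on n F src tgt \<and> (\<forall>l\<in>F. \<not> connected_on n (F - {l}) src tgt)"

definition inc_mat :: "nat \<Rightarrow> nat \<Rightarrow> (nat \<Rightarrow> nat) \<Rightarrow> (nat \<Rightarrow> nat) \<Rightarrow> real mat" where
  "inc_mat n m src tgt = mat n m (\<lambda>(i,l). if i = src l then 1 else if i = tgt l then -1 else 0)"

definition col_block :: "'a mat \<Rightarrow> nat \<Rightarrow> nat \<Rightarrow> 'a mat" where
  "col_block A c0 k = mat (dim_row A) k (\<lambda>(i,j). A $$ (i, c0 + j))"

definition hcat :: "'a mat \<Rightarrow> 'a mat \<Rightarrow> 'a mat" where
  "hcat A B = mat (dim_row A) (dim_col A + dim_col B)
     (\<lambda>(i,j). if j < dim_col A then A $$ (i,j) else B $$ (i, j - dim_col A))"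

(* matrix inverse of a square matrix (meaningful when it is invertible) *)
definition minv :: "'a :: field mat \<Rightarrow> 'a mat" where
  "minv A = (SOME B. B \<in> carrier_mat (dim_row A) (dim_row A) \<and>
                     A * B = 1\<^sub>m (dim_row A) \<and> B * A = 1\<^sub>m (dim_row A))"

definition cadj :: "complex mat \<Rightarrow> complex mat" where
  "cadj A = mat (dim_col A) (dim_row A) (\<lambda>(i,j). cnj (A $$ (j,i)))"

definition sigma_max :: "complex mat \<Rightarrow> real" where
  "sigma_max A = sqrt (Max {Re k | k. eigenvalue (cadj A * A) k})"

definition cmat :: "real mat \<Rightarrow> complex mat" where
  "cmat A = map_mat complex_of_real A"

definition hinf_norm :: "(complex \<Rightarrow> complex mat) \<Rightarrow> real" where
  "hinf_norm Phi = (SUP \<omega>::real. sigma_max (Phi (\<i> * complex_of_real \<omega>)))"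


(* Quantities of the paper, for graph data (n,m,src,tgt); tree edges are 0..<n-1 *)
definition Dtau :: "nat \<Rightarrow> nat \<Rightarrow> (nat \<Rightarrow> nat) \<Rightarrow> (nat \<Rightarrow> nat) \<Rightarrow> real mat" where
  "Dtau n m src tgt = col_block (inc_mat n m src tgt) 0 (n-1)"

definition Dc :: "nat \<Rightarrow> nat \<Rightarrow> (nat \<Rightarrow> nat) \<Rightarrow> (nat \<Rightarrow> nat) \<Rightarrow> real mat" where
  "Dc n m src tgt = col_block (inc_mat n m src tgt) (n-1) (m-(n-1))"

definition Ttc :: "nat \<Rightarrow> nat \<Rightarrow> (nat \<Rightarrow> nat) \<Rightarrow> (nat \<Rightarrow> nat) \<Rightarrow> real mat" where
  "Ttc n m src tgt = minv (transpose_mat (Dtau n m src tgt) * Dtau n m src tgt)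
                       * transpose_mat (Dtau n m src tgt) * Dc n m src tgt"

definition Rmat :: "nat \<Rightarrow> nat \<Rightarrow> (nat \<Rightarrow> nat) \<Rightarrow> (nat \<Rightarrow> nat) \<Rightarrow> real mat" where
  "Rmat n m src tgt = hcat (1\<^sub>m (n-1)) (Ttc n m src tgt)"

definition Lest :: "nat \<Rightarrow> nat \<Rightarrow> (nat \<Rightarrow> nat) \<Rightarrow> (nat \<Rightarrow> nat) \<Rightarrow> (nat \<Rightarrow> real) \<Rightarrow> real mat" where
  "Lest n m src tgt \<epsilon> = transpose_mat (Dtau n m src tgt) * mat_diag n (\<lambda>i. 1 / \<epsilon> i) * Dtau n m src tgt"

end

theory Submission
  imports Defs "Jordan_Normal_Form.Spectral_Radius"
begin


lemma minv_props:
  fixes X :: "'a::field mat"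
  assumes X: "X \<in> carrier_mat k k"
    and inj: "\<And>v. v \<in> carrier_vec k \<Longrightarrow> X *\<^sub>v v = 0\<^sub>v k \<Longrightarrow> v = 0\<^sub>v k"
  shows "minv X \<in> carrier_mat k k" "X * minv X = 1\<^sub>m k" "minv X * X = 1\<^sub>m k"
proof -
  have "det X \<noteq> 0" using det_0_iff_vec_prod_zero_field[OF X] inj by auto
  from det_non_zero_imp_unit[OF X this, of "()"]
  obtain B where B: "B \<in> carrier_mat k k" "X * B = 1\<^sub>m k" "B * X = 1\<^sub>m k"
    unfolding Units_def ring_mat_def by auto
  have ex: "\<exists>B. B \<in> carrier_mat (dim_row X) (dim_row X) \<and> X * B = 1\<^sub>m (dim_row X) \<and> B * X = 1\<^sub>m (dim_row X)"
    using B X by auto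
  from someI_ex[OF ex] X show "minv X \<in> carrier_mat k k" "X * minv X = 1\<^sub>m k" "minv X * X = 1\<^sub>m k"
    unfolding minv_def by auto
qed

lemma cadj_carrier[simp]: "A \<in> carrier_mat a b \<Longrightarrow> cadj A \<in> carrier_mat b a"
  unfolding cadj_def by auto

lemma cadj_dims[simp]: "dim_row (cadj A) = dim_col A" "dim_col (cadj A) = dim_row A"
  unfolding cadj_def by auto

lemma cadj_mult:
  assumes "A \<in> carrier_mat a b" "B \<in> carrier_mat b c"
  shows "cadj (A * B) = cadj B * cadj A"
  using assms unfolding cadj_def
  by (intro eq_matI) (auto simp: scalar_prod_def mult.commute)

lemma cadj_one[simp]: "cadj (1\<^sub>m k) = 1\<^sub>m k"
  unfolding cadj_def by (intro eq_matI) auto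

lemma cadj_cmat: "cadj (cmat X) = cmat (transpose_mat X)"
  unfolding cadj_def cmat_def by (intro eq_matI) auto

lemma cadj_add: assumes "A \<in> carrier_mat a b" "B \<in> carrier_mat a b"
  shows "cadj (A + B) = cadj A + cadj B"
  using assms unfolding cadj_def by (intro eq_matI) auto

lemma cadj_smult: "cadj (s \<cdot>\<^sub>m A) = cnj s \<cdot>\<^sub>m cadj A"
  unfolding cadj_def by (intro eq_matI) auto

lemma cmat_carrier[simp]: "A \<in> carrier_mat a b \<Longrightarrow> cmat A \<in> carrier_mat a b"
  unfolding cmat_def by auto

lemma cmat_dims[simp]: "dim_row (cmat A) = dim_row A" "dim_col (cmat A) = dim_col A"
  unfolding cmat_def by auto

lemma cmat_mult: "A \<in> carrier_mat a b \<Longrightarrow> B \<in> carrier_mat b c \<Longrightarrow> cmat (A * B) = cmat A * cmat B"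
  unfolding cmat_def by (rule of_real_hom.mat_hom_mult)

lemma quad_root_exists:
  fixes a b c :: complex assumes a: "a \<noteq> 0"
  shows "\<exists>\<alpha> \<beta>. \<alpha> + \<beta> = - b / a \<and> \<alpha> * \<beta> = c / a"
proof -
  define d where "d = csqrt (b^2 - 4*a*c)"
  have dd: "d * d = b^2 - 4*a*c" unfolding d_def by (metis power2_csqrt power2_eq_square)
  define \<alpha> where "\<alpha> = (- b + d) / (2*a)"
  define \<beta> where "\<beta> = (- b - d) / (2*a)"
  have "\<alpha> + \<beta> = - b / a" unfolding \<alpha>_def \<beta>_def using a by (simp add: field_simps)
  moreover have "\<alpha> * \<beta> = c / a"
  proof -
  have bb: "b*b = d*d + 4*a*c" using dd by (simp add: power2_eq_square)
  have pr: "(- b + d) * (- b - d) = 4*a*c" by (simp add: algebra_simps bb)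
  have "\<alpha> * \<beta> = ((- b + d) * (- b - d)) / (4*a*a)" unfolding \<alpha>_def \<beta>_def by (simp add: field_simps)
  also have "\<dots> = c / a" unfolding pr using a by (simp add: field_simps)
  finally show "\<alpha> * \<beta> = c / a" .
  qed
  ultimately show ?thesis by blast
qed

lemma quad_eigen:
  fixes C :: "complex mat"
  assumes C: "C \<in> carrier_mat k k" and u: "u \<in> carrier_vec k" and u0: "u \<noteq> 0\<^sub>v k" and k: "k > 0"
    and eq: "\<And>i. i < k \<Longrightarrow> a * (C *\<^sub>v (C *\<^sub>v u)) $ i + b * (C *\<^sub>v u) $ i + c * u $ i = 0"
  shows "\<exists>t. eigenvalue C t \<and> a * t^2 + b * t + c = 0"
proof (cases "a = 0")
  case False
  then obtain \<alpha> \<beta> where ab: "\<alpha> + \<beta> = - b / a" "\<alpha> * \<beta> = c / a" using quad_root_exists by blast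
  have bc: "b = - a * (\<alpha> + \<beta>)" "c = a * (\<alpha> * \<beta>)" using ab False by (auto simp: field_simps)
  have poly: "a * t^2 + b * t + c = a * (t - \<alpha>) * (t - \<beta>)" for t
    unfolding bc by (simp add: algebra_simps power2_eq_square)
  define w where "w = C *\<^sub>v u - \<beta> \<cdot>\<^sub>v u"
  have w: "w \<in> carrier_vec k" unfolding w_def using C u by auto
  show ?thesis
  proof (cases "w = 0\<^sub>v k")
    case True
    have "C *\<^sub>v u = \<beta> \<cdot>\<^sub>v u"
    proof (rule eq_vecI)
      fix i assume i: "i < dim_vec (\<beta> \<cdot>\<^sub>v u)"
      have "w $ i = 0" using True i u by simp
      thus "(C *\<^sub>v u) $ i = (\<beta> \<cdot>\<^sub>v u) $ i" using i u C unfolding w_def by auto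
    qed (use C u in auto)
    hence "eigenvalue C \<beta>" unfolding eigenvalue_def eigenvector_def using C u u0 by auto
    thus ?thesis using poly[of \<beta>] by auto
  next
    case False
    have "C *\<^sub>v w = \<alpha> \<cdot>\<^sub>v w"
    proof (rule eq_vecI)
      fix i assume i: "i < dim_vec (\<alpha> \<cdot>\<^sub>v w)"
      hence i: "i < k" using w by auto
      have e: "a * (C *\<^sub>v (C *\<^sub>v u)) $ i + b * (C *\<^sub>v u) $ i + c * u $ i = 0" using eq[OF i] .
      have cw: "C *\<^sub>v w = C *\<^sub>v (C *\<^sub>v u) - \<beta> \<cdot>\<^sub>v (C *\<^sub>v u)" unfolding w_def
        using C u by (simp add: mult_minus_distrib_mat_vec mult_mat_vec)
      have "(C *\<^sub>v w) $ i = (C *\<^sub>v (C *\<^sub>v u)) $ i - \<beta> * (C *\<^sub>v u) $ i" unfolding cw using i C u by simp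
      also have "\<dots> = \<alpha> * ((C *\<^sub>v u) $ i - \<beta> * u $ i)"
      proof -
        have "b = - a * (\<alpha> + \<beta>)" "c = a * (\<alpha> * \<beta>)" using ab \<open>a \<noteq> 0\<close> by (auto simp: field_simps)
        with e have "a * ((C *\<^sub>v (C *\<^sub>v u)) $ i - \<beta> * (C *\<^sub>v u) $ i - \<alpha> * ((C *\<^sub>v u) $ i - \<beta> * u $ i)) = 0"
          by (simp add: algebra_simps)
        with \<open>a \<noteq> 0\<close> show ?thesis by simp
      qed
      also have "\<dots> = (\<alpha> \<cdot>\<^sub>v w) $ i" unfolding w_def using i C u by simp
      finally show "(C *\<^sub>v w) $ i = (\<alpha> \<cdot>\<^sub>v w) $ i" .
    qed (use C w in auto)
    hence "eigenvalue C \<alpha>" unfolding eigenvalue_def eigenvector_def using C w False by auto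
    thus ?thesis using poly[of \<alpha>] by auto
  qed
next
  case a0: True
  show ?thesis
  proof (cases "b = 0")
    case False
    have "C *\<^sub>v u = (- c / b) \<cdot>\<^sub>v u"
    proof (rule eq_vecI)
      fix i assume i: "i < dim_vec ((- c / b) \<cdot>\<^sub>v u)"
      hence i: "i < k" using u by auto
      have "b * (C *\<^sub>v u) $ i = - (c * u $ i)" using eq[OF i] a0
        by (simp add: eq_neg_iff_add_eq_0 add.commute)
      with False show "(C *\<^sub>v u) $ i = ((- c / b) \<cdot>\<^sub>v u) $ i" using i u
        by (simp add: field_simps)
    qed (use C u in auto)
    hence "eigenvalue C (- c / b)" unfolding eigenvalue_def eigenvector_def using C u u0 by auto
    thus ?thesis using a0 False by (intro exI[of _ "- c / b"]) auto
  next
    case b0: True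
    have c0: "c = 0"
    proof (rule ccontr)
      assume "c \<noteq> 0"
      have "u = 0\<^sub>v k"
      proof (rule eq_vecI)
        fix i assume "i < dim_vec (0\<^sub>v k)" hence i: "i < k" by auto
        from eq[OF i] a0 b0 \<open>c \<noteq> 0\<close> show "u $ i = 0\<^sub>v k $ i" using i by simp
      qed (use u in auto)
      with u0 show False by simp
    qed
    obtain t where "t \<in> spectrum C" using spectrum_non_empty[OF C k] by auto
    hence "eigenvalue C t" unfolding spectrum_def by auto
    thus ?thesis using a0 b0 c0 by auto
  qed
qed

lemma mv_assoc: "dim_col A = dim_row B \<Longrightarrow> dim_col B = dim_vec v \<Longrightarrow> (A * B) *\<^sub>v v = A *\<^sub>v (B *\<^sub>v v)"
  by (rule assoc_mult_mat_vec[of _ "dim_row A" "dim_col A" _ "dim_col B"]) (auto intro!: carrier_matI carrier_vecI)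

lemma mv_add_l: "dim_row A = dim_row B \<Longrightarrow> dim_col A = dim_col B \<Longrightarrow> dim_col A = dim_vec v \<Longrightarrow>
  (A + B) *\<^sub>v v = A *\<^sub>v v + B *\<^sub>v v"
  by (rule add_mult_distrib_mat_vec[of _ "dim_row A" "dim_col A"]) (auto intro!: carrier_matI carrier_vecI)

lemma mv_add_r: "dim_col A = dim_vec u \<Longrightarrow> dim_vec v = dim_vec u \<Longrightarrow>
  A *\<^sub>v (u + v) = A *\<^sub>v u + A *\<^sub>v v"
  by (rule mult_add_distrib_mat_vec[of _ "dim_row A" "dim_col A"]) (auto intro!: carrier_matI carrier_vecI)

lemma mv_smult_l: "dim_col A = dim_vec v \<Longrightarrow> (c \<cdot>\<^sub>m A) *\<^sub>v v = c \<cdot>\<^sub>v (A *\<^sub>v v)"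
  by (intro eq_vecI) (auto simp: mult_mat_vec_def scalar_prod_def sum_distrib_left mult.assoc)

lemma mv_smult_r: "dim_col A = dim_vec v \<Longrightarrow> A *\<^sub>v ((c :: 'a :: field) \<cdot>\<^sub>v v) = c \<cdot>\<^sub>v (A *\<^sub>v v)"
  by (rule mult_mat_vec[of _ "dim_row A" "dim_col A"]) (auto intro!: carrier_matI carrier_vecI)

lemma mv_one: "dim_vec v = k \<Longrightarrow> 1\<^sub>m k *\<^sub>v v = (v :: 'a :: semiring_1 vec)"
  by (rule one_mult_mat_vec) (auto intro!: carrier_vecI)

lemma cmat_mult': "dim_col A = dim_row B \<Longrightarrow> cmat (A * B) = cmat A * cmat B"
  by (rule cmat_mult[of _ "dim_row A" "dim_col A" _ "dim_col B"]) (auto intro!: carrier_matI)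

lemma cadj_mult': "dim_col A = dim_row B \<Longrightarrow> cadj (A * B) = cadj B * cadj A"
  by (rule cadj_mult[of _ "dim_row A" "dim_col A" _ "dim_col B"]) (auto intro!: carrier_matI)

lemma diag_dims[simp]: "dim_row (mat_diag k f) = k" "dim_col (mat_diag k f) = k"
  unfolding mat_diag_def by auto

lemma hcat_dims[simp]: "dim_row (hcat X Y) = dim_row X" "dim_col (hcat X Y) = dim_col X + dim_col Y"
  unfolding hcat_def by auto

lemma cmat_add: "dim_row A = dim_row B \<Longrightarrow> dim_col A = dim_col B \<Longrightarrow> cmat (A + B) = cmat A + cmat B"
  unfolding cmat_def by (intro eq_matI) auto

lemma cmat_smult: "cmat (c \<cdot>\<^sub>m A) = complex_of_real c \<cdot>\<^sub>m cmat A"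
  unfolding cmat_def by (intro eq_matI) auto

lemma cmat_one: "cmat (1\<^sub>m k) = 1\<^sub>m k"
  unfolding cmat_def by (intro eq_matI) auto


lemma diag_mv: "i < k \<Longrightarrow> dim_vec y = k \<Longrightarrow> (mat_diag k f *\<^sub>v y) $ i = f i * y $ i"
proof -
  assume i: "i < k" and y: "dim_vec y = k"
  have "(mat_diag k f *\<^sub>v y) $ i = (\<Sum>j\<in>{0..<k}. (if i = j then f j else 0) * y $ j)"
    using i y by (simp add: mat_diag_def scalar_prod_def)
  also have "\<dots> = (\<Sum>j\<in>{0..<k}. (if i = j then f j * y $ j else 0))"
    by (intro sum.cong) auto
  also have "\<dots> = f i * y $ i" using i by simp
  finally show ?thesis .
qed

definition qf :: "complex mat \<Rightarrow> complex vec \<Rightarrow> complex" where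
  "qf M x = (\<Sum>j<dim_vec x. cnj (x $ j) * (M *\<^sub>v x) $ j)"

lemma cmat_index[simp]: "i < dim_row A \<Longrightarrow> j < dim_col A \<Longrightarrow> cmat A $$ (i,j) = complex_of_real (A $$ (i,j))"
  unfolding cmat_def by simp

lemma cmat_transpose: "cmat (transpose_mat A) = transpose_mat (cmat A)"
  unfolding cmat_def by (intro eq_matI) auto

lemma cmat_diag: "cmat (mat_diag p d) = mat_diag p (\<lambda>i. complex_of_real (d i))"
  unfolding cmat_def mat_diag_def by (intro eq_matI) auto

lemma transpose_cmat_vec:
  assumes F: "F \<in> carrier_mat p q" and z: "z \<in> carrier_vec p" and x: "x \<in> carrier_vec q"
  shows "(\<Sum>j<q. cnj (x $ j) * (transpose_mat (cmat F) *\<^sub>v z) $ j)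
       = (\<Sum>i<p. z $ i * cnj ((cmat F *\<^sub>v x) $ i))"
proof -
  have "(\<Sum>j<q. cnj (x $ j) * (transpose_mat (cmat F) *\<^sub>v z) $ j)
      = (\<Sum>j<q. \<Sum>i<p. cnj (x $ j) * (complex_of_real (F $$ (i,j)) * z $ i))"
    using F z x by (auto simp: mult_mat_vec_def scalar_prod_def sum_distrib_left lessThan_atLeast0 intro!: sum.cong)
  also have "\<dots> = (\<Sum>i<p. \<Sum>j<q. cnj (x $ j) * (complex_of_real (F $$ (i,j)) * z $ i))"
    by (rule sum.swap)
  also have "\<dots> = (\<Sum>i<p. z $ i * cnj ((cmat F *\<^sub>v x) $ i))"
    using F z x by (auto simp: mult_mat_vec_def scalar_prod_def sum_distrib_left lessThan_atLeast0 
        intro!: sum.cong)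
  finally show ?thesis .
qed


lemma qf_real:
  assumes F: "F \<in> carrier_mat p q" and x: "x \<in> carrier_vec q"
  shows "qf (cmat (transpose_mat F * mat_diag p d * F)) x
       = (\<Sum>i<p. complex_of_real (d i * (cmod ((cmat F *\<^sub>v x) $ i))^2))"
proof -
  let ?y = "cmat F *\<^sub>v x"
  have y: "?y \<in> carrier_vec p" by (rule mult_mat_vec_carrier[OF cmat_carrier[OF F] x])
  have M: "cmat (transpose_mat F * mat_diag p d * F) = transpose_mat (cmat F) * mat_diag p (\<lambda>i. complex_of_real (d i)) * cmat F"
    using F by (simp add: cmat_mult' cmat_transpose cmat_diag)
  have Mx: "cmat (transpose_mat F * mat_diag p d * F) *\<^sub>v x
      = transpose_mat (cmat F) *\<^sub>v (mat_diag p (\<lambda>i. complex_of_real (d i)) *\<^sub>v ?y)"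
    unfolding M using F x by (simp add: mv_assoc)
  have "qf (cmat (transpose_mat F * mat_diag p d * F)) x
     = (\<Sum>i<p. (mat_diag p (\<lambda>i. complex_of_real (d i)) *\<^sub>v ?y) $ i * cnj (?y $ i))"
  proof -
    have dx: "dim_vec x = q" using x by auto
    show ?thesis unfolding qf_def Mx dx
      by (rule transpose_cmat_vec[OF F mult_mat_vec_carrier[OF mat_diag_dim y] x])
  qed
  also have "\<dots> = (\<Sum>i<p. complex_of_real (d i) * ?y $ i * cnj (?y $ i))"
  proof (intro sum.cong refl)
    fix i assume "i \<in> {..<p}" hence i: "i < p" by simp
    have dy: "dim_vec ?y = p" using F by auto
    show "(mat_diag p (\<lambda>i. complex_of_real (d i)) *\<^sub>v ?y) $ i * cnj (?y $ i) = complex_of_real (d i) * ?y $ i * cnj (?y $ i)"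
      unfolding diag_mv[OF i dy] ..
  qed
  also have "\<dots> = (\<Sum>i<p. complex_of_real (d i * (cmod (?y $ i))^2))"
    by (intro sum.cong refl) (simp add: complex_norm_square[symmetric] mult.assoc)
  finally show ?thesis .
qed

lemma qf_pos:
  assumes F: "F \<in> carrier_mat p q" and x: "x \<in> carrier_vec q" and d: "\<And>i. i < p \<Longrightarrow> d i > 0"
    and nz: "cmat F *\<^sub>v x \<noteq> 0\<^sub>v p"
  shows "\<exists>r>0. qf (cmat (transpose_mat F * mat_diag p d * F)) x = complex_of_real r"
proof -
  let ?y = "cmat F *\<^sub>v x"
  have y: "?y \<in> carrier_vec p" by (rule mult_mat_vec_carrier[OF cmat_carrier[OF F] x])
  obtain i where i: "i < p" "?y $ i \<noteq> 0"
  proof (rule ccontr)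
    assume "\<not> thesis"
    hence "\<forall>i<p. ?y $ i = 0" using that by blast
    hence "?y = 0\<^sub>v p" using y F by (intro eq_vecI) auto
    with nz show False by simp
  qed
  have "0 < (\<Sum>i<p. d i * (cmod (?y $ i))^2)"
  proof (rule sum_pos2[where i=i])
    show "0 < d i * (cmod (?y $ i))^2" using i d[of i] by auto
    fix j assume "j \<in> {..<p}" thus "0 \<le> d j * (cmod (?y $ j))^2" using d[of j] by auto
  qed (use i in auto)
  thus ?thesis unfolding qf_real[OF F x] by (intro exI[of _ "(\<Sum>i<p. d i * (cmod (?y $ i))^2)"]) auto
qed

lemma rtranclp_lift:
  assumes "\<And>a b. R a b \<Longrightarrow> S\<^sup>*\<^sup>* a b" and "R\<^sup>*\<^sup>* x y"
  shows "S\<^sup>*\<^sup>* x y"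
  using assms(2) by (induction rule: rtranclp_induct) (auto dest: assms(1) intro: rtranclp_trans)

lemma adj_in_sym: "adj_in F src tgt a b \<Longrightarrow> adj_in F src tgt b a"
  unfolding adj_in_def by auto

lemma adj_in_rtrancl_sym: "(adj_in F src tgt)\<^sup>*\<^sup>* a b \<Longrightarrow> (adj_in F src tgt)\<^sup>*\<^sup>* b a"
  by (induction rule: rtranclp_induct) (auto intro: converse_rtranclp_into_rtranclp adj_in_sym)

locale setting =
  fixes n m :: nat and src tgt :: "nat \<Rightarrow> nat" and w \<epsilon> :: "nat \<Rightarrow> real"
  assumes n2: "n \<ge> 2"
    and graph: "simple_graph n m src tgt"
    and mge: "n - 1 \<le> m"
    and tree: "spanning_tree n {0..<n-1} src tgt"
    and wpos: "\<forall>l<m. w l > 0"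
    and epos: "\<forall>i<n. \<epsilon> i > 0"
begin

abbreviation "r \<equiv> n - 1"
abbreviation "D \<equiv> Dtau n m src tgt"

lemma r_pos: "r > 0" using n2 by auto

lemma D_carrier[simp]: "D \<in> carrier_mat n r"
  unfolding Dtau_def col_block_def inc_mat_def by auto

lemma D_dims[simp]: "dim_row D = n" "dim_col D = r"
  using D_carrier by auto

lemma D_index: "i < n \<Longrightarrow> l < r \<Longrightarrow> D $$ (i,l) = (if i = src l then 1 else if i = tgt l then -1 else 0)"
  unfolding Dtau_def col_block_def inc_mat_def using mge by auto

lemma src_tgt: "l < m \<Longrightarrow> src l < n \<and> tgt l < n \<and> src l \<noteq> tgt l"
  using graph unfolding simple_graph_def by auto

lemma D_inj:
  assumes x: "x \<in> carrier_vec r" and Dx: "cmat D *\<^sub>v x = 0\<^sub>v n"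
  shows "x = 0\<^sub>v r"
proof (rule eq_vecI)
  show "dim_vec x = dim_vec (0\<^sub>v r)" using x by auto
  fix l assume "l < dim_vec (0\<^sub>v r)"
  hence l: "l < r" by auto
  define F' where "F' = {0..<r} - {l}"
  have lm: "l < m" using l mge by auto
  have nconn: "\<not> (adj_in F' src tgt)\<^sup>*\<^sup>* (src l) (tgt l)"
  proof
    assume p: "(adj_in F' src tgt)\<^sup>*\<^sup>* (src l) (tgt l)"
    have "connected_on n F' src tgt"
      unfolding connected_on_def
    proof (intro allI impI)
      fix i j assume "i < n" "j < n"
      hence "(adj_in {0..<r} src tgt)\<^sup>*\<^sup>* i j" using tree unfolding spanning_tree_def connected_on_def by auto
      thus "(adj_in F' src tgt)\<^sup>*\<^sup>* i j"
      proof (rule rtranclp_lift[rotated])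
        fix a b assume "adj_in {0..<r} src tgt a b"
        then obtain l' where l': "l' < r" "(src l' = a \<and> tgt l' = b) \<or> (src l' = b \<and> tgt l' = a)"
          unfolding adj_in_def by auto
        show "(adj_in F' src tgt)\<^sup>*\<^sup>* a b"
        proof (cases "l' = l")
          case True
          thus ?thesis using l' p adj_in_rtrancl_sym[OF p] by auto
        next
          case False
          hence "adj_in F' src tgt a b" using l' unfolding adj_in_def F'_def by auto
          thus ?thesis by auto
        qed
      qed
    qed
    moreover have "l \<in> {0..<r}" using l by auto
    ultimately show False using tree unfolding spanning_tree_def F'_def by auto
  qed
  define S where "S = {i. i < n \<and> (adj_in F' src tgt)\<^sup>*\<^sup>* (src l) i}"
  have finS: "finite S" unfolding S_def by auto
  have srcS: "src l \<in> S" using src_tgt[OF lm] unfolding S_def by auto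
  have tgtS: "tgt l \<notin> S" using nconn unfolding S_def by auto
  have closed: "src l' \<in> S \<longleftrightarrow> tgt l' \<in> S" if "l' < r" "l' \<noteq> l" for l'
  proof -
    have lm': "l' < m" using that mge by auto
    have "adj_in F' src tgt (src l') (tgt l')" using that unfolding adj_in_def F'_def by auto
    thus ?thesis using src_tgt[OF lm'] unfolding S_def
      by (auto intro: rtranclp.rtrancl_into_rtrancl adj_in_sym)
  qed
  have colsum: "(\<Sum>i\<in>S. complex_of_real (D $$ (i,l'))) = (if l' = l then 1 else 0)" if l': "l' < r" for l'
  proof -
    have lm': "l' < m" using l' mge by auto
    have "(\<Sum>i\<in>S. complex_of_real (D $$ (i,l'))) = (\<Sum>i\<in>S. (if i = src l' then 1 else 0) - (if i = tgt l' then 1 else 0))"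
      using src_tgt[OF lm'] l' by (intro sum.cong refl) (auto simp: D_index S_def)
    also have "\<dots> = (if src l' \<in> S then 1 else 0) - (if tgt l' \<in> S then 1 else 0)"
      using finS by (simp add: sum_subtractf)
    also have "\<dots> = (if l' = l then 1 else 0)"
      using closed[OF l'] srcS tgtS by auto
    finally show ?thesis .
  qed
  have "0 = (\<Sum>i\<in>S. (cmat D *\<^sub>v x) $ i)" unfolding Dx S_def by auto
  also have "\<dots> = (\<Sum>i\<in>S. \<Sum>l'<r. complex_of_real (D $$ (i,l')) * x $ l')"
    using x by (intro sum.cong refl) (auto simp: S_def mult_mat_vec_def scalar_prod_def lessThan_atLeast0)
  also have "\<dots> = (\<Sum>l'<r. x $ l' * (\<Sum>i\<in>S. complex_of_real (D $$ (i,l'))))"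
    by (subst sum.swap) (simp add: sum_distrib_left mult.commute)
  also have "\<dots> = (\<Sum>l'<r. x $ l' * (if l' = l then 1 else 0))"
    by (intro sum.cong refl) (simp add: colsum)
  also have "\<dots> = x $ l" using l by (simp add: if_distrib cong: if_cong)
  finally show "x $ l = 0\<^sub>v r $ l" using l by simp
qed


lemma tcarrier: "A \<in> carrier_mat a b \<Longrightarrow> transpose_mat A \<in> carrier_mat b a" by simp

lemma cmat_mult_vec: "X \<in> carrier_mat p k \<Longrightarrow> x \<in> carrier_vec k \<Longrightarrow>
   cmat X *\<^sub>v map_vec complex_of_real x = map_vec complex_of_real (X *\<^sub>v x)"
  by (intro eq_vecI) (auto simp: mult_mat_vec_def scalar_prod_def cmat_def)

lemma real_inj_from_complex:
  assumes X: "X \<in> carrier_mat p k"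
    and inj: "\<And>xc. xc \<in> carrier_vec k \<Longrightarrow> cmat X *\<^sub>v xc = 0\<^sub>v p \<Longrightarrow> xc = 0\<^sub>v k"
    and x: "x \<in> carrier_vec k" and Xx: "X *\<^sub>v x = 0\<^sub>v p"
  shows "x = 0\<^sub>v k"
proof -
  have "cmat X *\<^sub>v map_vec complex_of_real x = map_vec complex_of_real (X *\<^sub>v x)"
    by (rule cmat_mult_vec[OF X x])
  also have "\<dots> = 0\<^sub>v p" unfolding Xx by (intro eq_vecI) auto
  finally have e: "cmat X *\<^sub>v map_vec complex_of_real x = 0\<^sub>v p" .
  have "map_vec complex_of_real x \<in> carrier_vec k" using x by simp
  from inj[OF this e] have z: "map_vec complex_of_real x = 0\<^sub>v k" .
  show ?thesis
  proof (rule eq_vecI)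
    fix i assume "i < dim_vec (0\<^sub>v k)"
    hence i: "i < k" by simp
    have "map_vec complex_of_real x $ i = 0" using z i by simp
    thus "x $ i = 0\<^sub>v k $ i" using i x by simp
  qed (use x in auto)
qed

lemma qf_zero: "x \<in> carrier_vec k \<Longrightarrow> M *\<^sub>v x = 0\<^sub>v k \<Longrightarrow> qf M x = 0"
  unfolding qf_def by (auto intro!: sum.neutral)

abbreviation "Ei \<equiv> mat_diag n (\<lambda>i. 1 / \<epsilon> i)"
abbreviation "Eh \<equiv> mat_diag n (\<lambda>i. 1 / sqrt (\<epsilon> i))"
abbreviation "Wd \<equiv> mat_diag m w"
abbreviation "Wh \<equiv> mat_diag m (\<lambda>l. sqrt (w l))"
abbreviation "L \<equiv> Lest n m src tgt \<epsilon>"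
abbreviation "T \<equiv> Ttc n m src tgt"
abbreviation "R \<equiv> Rmat n m src tgt"
abbreviation "A \<equiv> R * Wd * transpose_mat R"

lemma L_carrier[simp]: "L \<in> carrier_mat r r"
  unfolding Lest_def by auto

lemma DtD_inj_c: assumes x: "x \<in> carrier_vec r" and z: "cmat (transpose_mat D * D) *\<^sub>v x = 0\<^sub>v r"
  shows "x = 0\<^sub>v r"
proof (rule ccontr)
  assume "x \<noteq> 0\<^sub>v r"
  hence "cmat D *\<^sub>v x \<noteq> 0\<^sub>v n" using D_inj[OF x] by auto
  from qf_pos[OF D_carrier x _ this, of "\<lambda>_. 1"] obtain c where "c > 0"
    "qf (cmat (transpose_mat D * mat_diag n (\<lambda>_. 1) * D)) x = complex_of_real c" by auto
  moreover have "transpose_mat D * mat_diag n (\<lambda>_. 1) * D = transpose_mat D * D" by simp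
  ultimately show False using qf_zero[OF x z] by simp
qed

lemma DtD_inv: "minv (transpose_mat D * D) \<in> carrier_mat r r"
proof -
  have X: "transpose_mat D * D \<in> carrier_mat r r" by auto
  show ?thesis
    by (rule minv_props(1)[OF X real_inj_from_complex[OF X DtD_inj_c]]) auto
qed

lemma Dc_carrier[simp]: "Dc n m src tgt \<in> carrier_mat n (m - r)"
  unfolding Dc_def col_block_def inc_mat_def by auto

lemma T_carrier[simp]: "T \<in> carrier_mat r (m - r)"
  unfolding Ttc_def
  by (rule mult_carrier_mat[OF mult_carrier_mat[OF DtD_inv tcarrier[OF D_carrier]] Dc_carrier])

lemma R_carrier[simp]: "R \<in> carrier_mat r m"
  unfolding Rmat_def hcat_def using T_carrier mge by auto

lemma R_dims[simp]: "dim_row R = r" "dim_col R = m"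
  using R_carrier by auto

lemma R_index: "i < r \<Longrightarrow> l < m \<Longrightarrow> R $$ (i,l) = (if l < r then (if i = l then 1 else 0) else T $$ (i, l - r))"
  unfolding Rmat_def hcat_def using T_carrier mge by auto

lemma Rt_inj: assumes x: "x \<in> carrier_vec r" and z: "cmat (transpose_mat R) *\<^sub>v x = 0\<^sub>v m"
  shows "x = 0\<^sub>v r"
proof (rule eq_vecI)
  fix l assume "l < dim_vec (0\<^sub>v r)" hence l: "l < r" by auto
  have lm: "l < m" using l mge by auto
  have "0 = (cmat (transpose_mat R) *\<^sub>v x) $ l" using z lm by simp
  also have "\<dots> = (\<Sum>i<r. complex_of_real (R $$ (i,l)) * x $ i)"
    using x lm by (auto simp: mult_mat_vec_def scalar_prod_def lessThan_atLeast0 intro!: sum.cong)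
  also have "\<dots> = (\<Sum>i<r. (if i = l then x $ i else 0))"
    using lm l by (intro sum.cong refl) (auto simp: R_index)
  also have "\<dots> = x $ l" using l by simp
  finally show "x $ l = 0\<^sub>v r $ l" using l by simp
qed (use x in auto)

lemma transpose_diag[simp]: "transpose_mat (mat_diag k f) = mat_diag k f"
  unfolding mat_diag_def by (intro eq_matI) auto

lemma A_carrier[simp]: "A \<in> carrier_mat r r" by auto

lemma A_form: "A = transpose_mat (transpose_mat R) * Wd * transpose_mat R" by simp

lemma A_pos: assumes x: "x \<in> carrier_vec r" "x \<noteq> 0\<^sub>v r"
  shows "\<exists>c>0. qf (cmat A) x = complex_of_real c"
proof -
  have nz: "cmat (transpose_mat R) *\<^sub>v x \<noteq> 0\<^sub>v m" using Rt_inj x by auto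
  have wp: "\<And>i. i < m \<Longrightarrow> 0 < w i" using wpos by auto
  from qf_pos[where d=w, OF tcarrier[OF R_carrier] x(1) wp nz] show ?thesis unfolding A_form[symmetric] .
qed

lemma L_pos: assumes x: "x \<in> carrier_vec r" "x \<noteq> 0\<^sub>v r"
  shows "\<exists>c>0. qf (cmat L) x = complex_of_real c"
proof -
  have nz: "cmat D *\<^sub>v x \<noteq> 0\<^sub>v n" using D_inj x by auto
  have ep: "\<And>i. i < n \<Longrightarrow> 0 < 1 / \<epsilon> i" using epos by auto
  from qf_pos[where d="\<lambda>i. 1 / \<epsilon> i", OF D_carrier x(1) ep nz] show ?thesis unfolding Lest_def .
qed

lemma inj_from_pos:
  assumes pos: "\<And>x. x \<in> carrier_vec k \<Longrightarrow> x \<noteq> 0\<^sub>v k \<Longrightarrow> \<exists>c>0. qf M x = complex_of_real c"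
    and x: "x \<in> carrier_vec k" and Mx: "M *\<^sub>v x = 0\<^sub>v k"
  shows "x = 0\<^sub>v k"
  using pos[OF x] qf_zero[OF x Mx] by force

lemma A_inj_c: "x \<in> carrier_vec r \<Longrightarrow> cmat A *\<^sub>v x = 0\<^sub>v r \<Longrightarrow> x = 0\<^sub>v r"
  using inj_from_pos[OF A_pos] by blast

lemma L_inj_c: "x \<in> carrier_vec r \<Longrightarrow> cmat L *\<^sub>v x = 0\<^sub>v r \<Longrightarrow> x = 0\<^sub>v r"
  using inj_from_pos[OF L_pos] by blast

lemma L_sym: "transpose_mat L = L"
  unfolding Lest_def
proof -
  have "transpose_mat (transpose_mat D * Ei * D) = transpose_mat D * transpose_mat (transpose_mat D * Ei)"
    by (rule transpose_mult[of _ r n _ r]) (rule mult_carrier_mat[of _ r n], auto)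
  also have "transpose_mat (transpose_mat D * Ei) = Ei * D"
    by (subst transpose_mult[of _ r n _ n]) auto
  also have "transpose_mat D * (Ei * D) = transpose_mat D * Ei * D"
    by (rule assoc_mult_mat[symmetric, of _ r n _ n _ r]) auto
  finally show "transpose_mat (transpose_mat D * Ei * D) = transpose_mat D * Ei * D" .
qed

lemma A_sym: "transpose_mat A = A"
proof -
  have "transpose_mat A = R * transpose_mat (R * Wd)"
    by (subst transpose_mult[of _ r m _ r]) (rule mult_carrier_mat[of _ r m], auto)
  also have "transpose_mat (R * Wd) = Wd * transpose_mat R"
    by (subst transpose_mult[of _ r m _ m]) auto
  also have "R * (Wd * transpose_mat R) = A"
    by (rule assoc_mult_mat[symmetric, of _ r m _ m _ r]) auto
  finally show ?thesis .
qed


end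




lemma mm_assoc: "dim_col A = dim_row B \<Longrightarrow> dim_col B = dim_row C \<Longrightarrow> (A * B) * C = A * (B * C)"
  by (rule assoc_mult_mat[of _ "dim_row A" "dim_col A" _ "dim_col B" _ "dim_col C"]) (auto intro!: carrier_matI)

lemma transpose_mult': "dim_col A = dim_row B \<Longrightarrow> transpose_mat (A * B) = transpose_mat B * transpose_mat (A :: 'a :: comm_semiring_0 mat)"
  by (rule transpose_mult[of _ "dim_row A" "dim_col A" _ "dim_col B"]) (auto intro!: carrier_matI)

lemma hcat_tt:
  fixes X Y :: "'a :: comm_ring_1 mat"
  assumes rows: "dim_row X = dim_row Y"
  shows "hcat X Y * transpose_mat (hcat X Y) = X * transpose_mat X + Y * transpose_mat Y"
proof (rule eq_matI)
  let ?H = "hcat X Y" let ?b = "dim_col X" let ?c = "dim_col Y"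
  fix i j assume ij: "i < dim_row (X * transpose_mat X + Y * transpose_mat Y)"
    "j < dim_col (X * transpose_mat X + Y * transpose_mat Y)"
  hence i: "i < dim_row X" and j: "j < dim_row X" using rows by auto
  have "(?H * transpose_mat ?H) $$ (i,j) = (\<Sum>k\<in>{0..<?b+?c}. ?H $$ (i,k) * ?H $$ (j,k))"
    using i j by (simp add: scalar_prod_def)
  also have "\<dots> = (\<Sum>k\<in>{0..<?b}. ?H $$ (i,k) * ?H $$ (j,k)) + (\<Sum>k\<in>{?b..<?b+?c}. ?H $$ (i,k) * ?H $$ (j,k))"
    by (rule sum.atLeastLessThan_concat[symmetric]) auto
  also have "(\<Sum>k\<in>{0..<?b}. ?H $$ (i,k) * ?H $$ (j,k)) = (\<Sum>k\<in>{0..<?b}. X $$ (i,k) * X $$ (j,k))"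
    using i j by (intro sum.cong) (auto simp: hcat_def)
  also have "(\<Sum>k\<in>{?b..<?b+?c}. ?H $$ (i,k) * ?H $$ (j,k)) = (\<Sum>k\<in>{0+?b..<?c+?b}. ?H $$ (i,k) * ?H $$ (j,k))"
    by (simp add: add.commute)
  also have "\<dots> = (\<Sum>k\<in>{0..<?c}. ?H $$ (i,k+?b) * ?H $$ (j,k+?b))"
    by (rule sum.shift_bounds_nat_ivl)
  also have "\<dots> = (\<Sum>k\<in>{0..<?c}. Y $$ (i,k) * Y $$ (j,k))"
    using i j rows by (intro sum.cong) (auto simp: hcat_def)
  also have "(\<Sum>k\<in>{0..<?b}. X $$ (i,k) * X $$ (j,k)) + (\<Sum>k\<in>{0..<?c}. Y $$ (i,k) * Y $$ (j,k))
     = (X * transpose_mat X + Y * transpose_mat Y) $$ (i,j)"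
    using i j rows by (simp add: scalar_prod_def)
  finally show "(?H * transpose_mat ?H) $$ (i,j) = (X * transpose_mat X + Y * transpose_mat Y) $$ (i,j)" .
qed (use rows in auto)

lemma smult_tt: "(c \<cdot>\<^sub>m P) * transpose_mat (c \<cdot>\<^sub>m P) = (c * c) \<cdot>\<^sub>m (P * transpose_mat (P :: 'a :: comm_ring_1 mat))"
  by (intro eq_matI) (auto simp: scalar_prod_def sum_distrib_left algebra_simps)

lemma mat_diag_cong: "(\<And>i. i < k \<Longrightarrow> f i = g i) \<Longrightarrow> mat_diag k f = mat_diag k g"
  unfolding mat_diag_def by (intro eq_matI) auto

lemma maxS_le:
  fixes X :: "complex mat"
  assumes X: "X \<in> carrier_mat N N" and N: "N > 0" and b: "\<And>k. eigenvalue X k \<Longrightarrow> Re k \<le> B"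
  shows "Max {Re k | k. eigenvalue X k} \<le> B"
proof -
  have S: "{Re k | k. eigenvalue X k} = Re ` spectrum X" by (auto simp: spectrum_def)
  have "finite (Re ` spectrum X)" using card_finite_spectrum(1)[OF X] by simp
  moreover have "Re ` spectrum X \<noteq> {}" using spectrum_non_empty[OF X N] by simp
  ultimately show ?thesis unfolding S using b by (auto simp: spectrum_def)
qed

lemma maxS_eq:
  fixes X :: "complex mat"
  assumes X: "X \<in> carrier_mat N N" and N: "N > 0" and b: "\<And>k. eigenvalue X k \<Longrightarrow> Re k \<le> B"
    and e: "eigenvalue X (complex_of_real B)"
  shows "Max {Re k | k. eigenvalue X k} = B"
proof (rule antisym)
  show "Max {Re k | k. eigenvalue X k} \<le> B" by (rule maxS_le[OF X N b])
  have S: "{Re k | k. eigenvalue X k} = Re ` spectrum X" by (auto simp: spectrum_def)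
  have "finite (Re ` spectrum X)" using card_finite_spectrum(1)[OF X] by simp
  moreover have "B \<in> Re ` spectrum X" using e unfolding spectrum_def by (auto intro!: image_eqI[of _ _ "complex_of_real B"])
  ultimately show "B \<le> Max {Re k | k. eigenvalue X k}" unfolding S by simp
qed

lemma minv_sym:
  fixes B :: "'a :: field mat"
  assumes B: "B \<in> carrier_mat k k" and Bs: "transpose_mat B = B"
    and K: "minv B \<in> carrier_mat k k" and BK: "B * minv B = 1\<^sub>m k"
  shows "transpose_mat (minv B) = minv B"
proof -
  have "transpose_mat (minv B) * B = 1\<^sub>m k"
  proof -
    have "transpose_mat (minv B) * B = transpose_mat (minv B) * transpose_mat B" unfolding Bs ..
    also have "\<dots> = transpose_mat (B * minv B)" using B K by (simp add: transpose_mult)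
    finally show ?thesis unfolding BK by simp
  qed
  hence "transpose_mat (minv B) * B * minv B = minv B" using K by simp
  moreover have "transpose_mat (minv B) * B * minv B = transpose_mat (minv B)"
    using B K BK by (simp add: assoc_mult_mat[of _ k k _ k _ k])
  ultimately show ?thesis by simp
qed

lemma inj_diff:
  fixes X :: "complex mat"
  assumes inj: "\<And>y. y \<in> carrier_vec k \<Longrightarrow> X *\<^sub>v y = 0\<^sub>v k \<Longrightarrow> y = 0\<^sub>v k"
    and X: "X \<in> carrier_mat k k" and a: "dim_vec a = k" and b: "dim_vec b = k" and e: "X *\<^sub>v a = X *\<^sub>v b"
  shows "a = b"
proof -
  have "X *\<^sub>v (a - b) = X *\<^sub>v a - X *\<^sub>v b"
    by (rule mult_minus_distrib_mat_vec[OF X]) (use a b in \<open>auto intro: carrier_vecI\<close>)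
  also have "\<dots> = 0\<^sub>v k" unfolding e using X by (intro eq_vecI) auto
  finally have "a - b = 0\<^sub>v k" by (rule inj[rotated]) (use a b in \<open>auto intro: carrier_vecI\<close>)
  show ?thesis
  proof (rule eq_vecI)
    fix i assume "i < dim_vec b" hence i: "i < k" using b by simp
    have "(a - b) $ i = 0" using \<open>a - b = 0\<^sub>v k\<close> i by simp
    thus "a $ i = b $ i" using i a b by simp
  qed (use a b in simp)
qed

lemma transpose_lin: "dim_row X = dim_row Y \<Longrightarrow> dim_col X = dim_col Y \<Longrightarrow>
   transpose_mat (a \<cdot>\<^sub>m X + b \<cdot>\<^sub>m Y) = a \<cdot>\<^sub>m transpose_mat X + b \<cdot>\<^sub>m transpose_mat Y"
  by (intro eq_matI) auto

context setting begin

lemma L_dims[simp]: "dim_row L = r" "dim_col L = r" using L_carrier by auto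
lemma T_dims[simp]: "dim_row T = r" "dim_col T = m - r" using T_carrier by auto

abbreviation "Mst \<equiv> L * R * Wd * transpose_mat R"
abbreviation "cM \<equiv> cmat Mst"
abbreviation "cA \<equiv> cmat A"
abbreviation "cL \<equiv> cmat L"

lemma cM_carrier[simp]: "cM \<in> carrier_mat r r" by (rule carrier_matI) simp_all
lemma cM_dims[simp]: "dim_row cM = r" "dim_col cM = r" by auto

lemma cA_vec: "dim_vec x = r \<Longrightarrow> cA *\<^sub>v x = cmat R *\<^sub>v (cmat Wd *\<^sub>v (cmat (transpose_mat R) *\<^sub>v x))"
  by (simp add: cmat_mult' mv_assoc)

lemma cM_vec: "dim_vec x = r \<Longrightarrow> cM *\<^sub>v x = cL *\<^sub>v (cA *\<^sub>v x)"
  by (simp add: cmat_mult' mv_assoc)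

lemma Mst_t: "transpose_mat Mst = A * L"
proof -
  have "Mst = L * A"
    by (simp add: mm_assoc)
  hence "transpose_mat Mst = transpose_mat A * transpose_mat L"
    by (simp add: transpose_mult')
  thus ?thesis by (simp add: A_sym L_sym)
qed

lemma cMt_vec: "dim_vec x = r \<Longrightarrow> cmat (transpose_mat Mst) *\<^sub>v x = cA *\<^sub>v (cL *\<^sub>v x)"
  unfolding Mst_t by (simp add: cmat_mult' mv_assoc)


lemma M_eig: assumes "eigenvalue cM t" shows "Im t = 0 \<and> Re t > 0"
proof -
  obtain x where x: "x \<in> carrier_vec r" "x \<noteq> 0\<^sub>v r" "cM *\<^sub>v x = t \<cdot>\<^sub>v x"
    using assms unfolding eigenvalue_def eigenvector_def by auto
  define y where "y = cA *\<^sub>v x"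
  have y: "y \<in> carrier_vec r" unfolding y_def by (rule carrier_vecI) simp
  have y0: "y \<noteq> 0\<^sub>v r" using A_inj_c[OF x(1)] x(2) unfolding y_def by auto
  have Ly: "cL *\<^sub>v y = t \<cdot>\<^sub>v x" using cM_vec[of x] x unfolding y_def by auto
  obtain a where a: "a > 0" "qf cA x = complex_of_real a" using A_pos[OF x(1,2)] by auto
  obtain b where b: "b > 0" "qf cL y = complex_of_real b" using L_pos[OF y y0] by auto
  have "qf cL y = (\<Sum>j<r. cnj (y $ j) * (t * x $ j))"
    unfolding qf_def Ly using y x by (intro sum.cong) auto
  also have "\<dots> = t * cnj (\<Sum>j<r. y $ j * cnj (x $ j))"
    by (simp add: sum_distrib_left mult.commute mult.left_commute)
  also have "(\<Sum>j<r. y $ j * cnj (x $ j)) = qf cA x"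
    unfolding qf_def y_def using x by (intro sum.cong) auto
  finally have "complex_of_real b = t * complex_of_real a" using a b by simp
  hence "t = complex_of_real (b / a)" using a by (simp add: field_simps)
  thus ?thesis using a b by simp
qed

lemma M_inj: "dim_vec x = r \<Longrightarrow> cM *\<^sub>v x = 0\<^sub>v r \<Longrightarrow> x = 0\<^sub>v r"
proof -
  assume x: "dim_vec x = r" and z: "cM *\<^sub>v x = 0\<^sub>v r"
  have e: "cL *\<^sub>v (cA *\<^sub>v x) = 0\<^sub>v r" using z cM_vec[OF x] by simp
  have "cA *\<^sub>v x = 0\<^sub>v r" by (rule L_inj_c[OF _ e]) (rule carrier_vecI, simp)
  thus "x = 0\<^sub>v r" by (rule A_inj_c[OF carrier_vecI[OF x]])
qed


abbreviation "G sw sv \<equiv> hcat (sw \<cdot>\<^sub>m (transpose_mat D * Eh)) ((- sv) \<cdot>\<^sub>m (L * R * Wh))"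

lemma G_dims[simp]: "dim_row (G sw sv) = r" "dim_col (G sw sv) = n + m" by auto

lemma EhEh: "Eh * Eh = Ei"
  using epos by (simp, intro mat_diag_cong) (auto simp: real_sqrt_mult[symmetric])

lemma WhWh: "Wh * Wh = Wd"
  using wpos by (simp, intro mat_diag_cong) (auto simp: real_sqrt_mult[symmetric] less_imp_le)

lemma GGt: "G sw sv * transpose_mat (G sw sv) = (sw * sw) \<cdot>\<^sub>m L + (sv * sv) \<cdot>\<^sub>m (L * A * L)"
proof -
  have "G sw sv * transpose_mat (G sw sv) = (sw * sw) \<cdot>\<^sub>m ((transpose_mat D * Eh) * transpose_mat (transpose_mat D * Eh))
     + ((- sv) * (- sv)) \<cdot>\<^sub>m ((L * R * Wh) * transpose_mat (L * R * Wh))"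
    by (subst hcat_tt) (auto simp: smult_tt)
  also have "(transpose_mat D * Eh) * transpose_mat (transpose_mat D * Eh) = transpose_mat D * (Eh * Eh) * D"
    by (simp add: transpose_mult' mm_assoc del: mat_diag_diag)
  also have "\<dots> = L" unfolding EhEh Lest_def ..
  also have "(L * R * Wh) * transpose_mat (L * R * Wh) = L * R * (Wh * Wh) * transpose_mat R * transpose_mat L"
    by (simp add: transpose_mult' mm_assoc del: mat_diag_diag)
  also have "\<dots> = L * A * L" unfolding WhWh L_sym by (simp add: mm_assoc)
  finally show ?thesis by simp
qed

lemma GGt_vec: "dim_vec z = r \<Longrightarrow>
  cmat (G sw sv) *\<^sub>v (cmat (transpose_mat (G sw sv)) *\<^sub>v z)
   = complex_of_real (sw * sw) \<cdot>\<^sub>v (cL *\<^sub>v z) + complex_of_real (sv * sv) \<cdot>\<^sub>v (cL *\<^sub>v (cA *\<^sub>v (cL *\<^sub>v z)))"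
proof -
  assume z: "dim_vec z = r"
  have "cmat (G sw sv) *\<^sub>v (cmat (transpose_mat (G sw sv)) *\<^sub>v z) = cmat (G sw sv * transpose_mat (G sw sv)) *\<^sub>v z"
    using z by (simp add: cmat_mult' mv_assoc)
  also have "\<dots> = complex_of_real (sw * sw) \<cdot>\<^sub>v (cL *\<^sub>v z) + complex_of_real (sv * sv) \<cdot>\<^sub>v (cmat (L * A * L) *\<^sub>v z)"
    unfolding GGt using z by (simp add: cmat_add cmat_smult mv_add_l mv_smult_l)
  also have "cmat (L * A * L) *\<^sub>v z = cL *\<^sub>v (cA *\<^sub>v (cL *\<^sub>v z))"
    using z by (simp add: cmat_mult' mv_assoc)
  finally show ?thesis .
qed


abbreviation "Xs s \<equiv> s \<cdot>\<^sub>m 1\<^sub>m r + cM"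
abbreviation "PP sw sv s \<equiv> cmat Wh * (cmat (transpose_mat R) * minv (Xs s) * cmat (G sw sv))"

lemma Xs_dims[simp]: "dim_row (Xs s) = r" "dim_col (Xs s) = r" by auto

lemma Xs_vec: "dim_vec y = r \<Longrightarrow> Xs s *\<^sub>v y = s \<cdot>\<^sub>v y + cM *\<^sub>v y"
  by (simp add: mv_add_l mv_smult_l mv_one)

lemma Xs_inv: assumes s: "Re s = 0"
  shows "minv (Xs s) \<in> carrier_mat r r" "Xs s * minv (Xs s) = 1\<^sub>m r" "minv (Xs s) * Xs s = 1\<^sub>m r"
proof -
  have inj: "y = 0\<^sub>v r" if y: "y \<in> carrier_vec r" and z: "Xs s *\<^sub>v y = 0\<^sub>v r" for y
  proof (rule ccontr)
    assume y0: "y \<noteq> 0\<^sub>v r"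
    have dy: "dim_vec y = r" using y by auto
    have "cM *\<^sub>v y = (- s) \<cdot>\<^sub>v y"
    proof (rule eq_vecI)
      fix i assume "i < dim_vec ((- s) \<cdot>\<^sub>v y)" hence i: "i < r" using dy by auto
      have "(Xs s *\<^sub>v y) $ i = 0" using z i by simp
      hence "s * y $ i + (cM *\<^sub>v y) $ i = 0" unfolding Xs_vec[OF dy] using i dy by simp
      thus "(cM *\<^sub>v y) $ i = ((- s) \<cdot>\<^sub>v y) $ i" using i dy by (simp add: eq_neg_iff_add_eq_0 add.commute)
    qed (use dy in auto)
    hence "eigenvalue cM (- s)" unfolding eigenvalue_def eigenvector_def using y y0 by auto
    from M_eig[OF this] s show False by simp
  qed
  have X: "Xs s \<in> carrier_mat r r" by (rule carrier_matI) simp_all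
  from minv_props[OF X inj]
  show "minv (Xs s) \<in> carrier_mat r r" "Xs s * minv (Xs s) = 1\<^sub>m r" "minv (Xs s) * Xs s = 1\<^sub>m r" by auto
qed

lemma cadj_Xs: "cadj (Xs s) = cnj s \<cdot>\<^sub>m 1\<^sub>m r + cmat (transpose_mat Mst)"
  by (subst cadj_add[of _ r r]) (auto simp: cadj_smult cadj_cmat)

lemma smult_vec_zero_iff: "dim_vec v = k \<Longrightarrow> (c::complex) \<noteq> 0 \<Longrightarrow> c \<cdot>\<^sub>v v = 0\<^sub>v k \<Longrightarrow> v = 0\<^sub>v k"
proof (rule eq_vecI)
  fix i assume "dim_vec v = k" "c \<noteq> 0" "c \<cdot>\<^sub>v v = 0\<^sub>v k" "i < dim_vec (0\<^sub>v k)"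
  thus "v $ i = 0\<^sub>v k $ i" by (metis index_smult_vec(1) index_zero_vec(1) index_zero_vec(2) mult_eq_0_iff)
qed auto

lemma mv_zero: "dim_col X = k \<Longrightarrow> X *\<^sub>v 0\<^sub>v k = 0\<^sub>v (dim_row X)"
  by (intro eq_vecI) (auto simp: scalar_prod_def)


lemma PP_adj_vec:
  assumes Kc: "minv (Xs s) \<in> carrier_mat r r" and v: "dim_vec v = n + m"
  shows "(cadj (PP sw sv s) * PP sw sv s) *\<^sub>v v =
    cmat (transpose_mat (G sw sv)) *\<^sub>v (cadj (minv (Xs s)) *\<^sub>v (cmat R *\<^sub>v (cmat Wh *\<^sub>v (cmat Wh *\<^sub>v
      (cmat (transpose_mat R) *\<^sub>v (minv (Xs s) *\<^sub>v (cmat (G sw sv) *\<^sub>v v)))))))"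
proof -
  have d: "dim_row (minv (Xs s)) = r" "dim_col (minv (Xs s)) = r" using Kc by auto
  show ?thesis using v d by (simp add: cadj_mult' cadj_cmat mv_assoc)
qed

lemma PP_vec:
  assumes Kc: "minv (Xs s) \<in> carrier_mat r r" and v: "dim_vec v = n + m"
  shows "PP sw sv s *\<^sub>v v = cmat Wh *\<^sub>v (cmat (transpose_mat R) *\<^sub>v (minv (Xs s) *\<^sub>v (cmat (G sw sv) *\<^sub>v v)))"
proof -
  have d: "dim_row (minv (Xs s)) = r" "dim_col (minv (Xs s)) = r" using Kc by auto
  show ?thesis using v d by (simp add: mv_assoc)
qed

lemma WhWh_vec: "dim_vec x = m \<Longrightarrow> cmat Wh *\<^sub>v (cmat Wh *\<^sub>v x) = cmat Wd *\<^sub>v x"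
proof -
  assume x: "dim_vec x = m"
  have "cmat Wh *\<^sub>v (cmat Wh *\<^sub>v x) = cmat (Wh * Wh) *\<^sub>v x" using x by (simp add: cmat_mult' mv_assoc del: mat_diag_diag)
  thus ?thesis unfolding WhWh .
qed

lemma bound_core:
  assumes s: "Re s = 0" and ev: "eigenvector (cadj (PP sw sv s) * PP sw sv s) v \<mu>" and mu: "\<mu> \<noteq> 0"
  shows "\<exists>t. eigenvalue cM t \<and>
    (complex_of_real (sv * sv) - \<mu>) * t^2 + complex_of_real (sw * sw) * t + (- \<mu> * (s * cnj s)) = 0"
proof -
  note Kc = Xs_inv[OF s]
  define K where "K = minv (Xs s)"
  have dK: "dim_row K = r" "dim_col K = r" using Kc(1) unfolding K_def by auto
  have dv: "dim_vec v = n + m" and v0: "v \<noteq> 0\<^sub>v (n + m)"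
    and evq: "(cadj (PP sw sv s) * PP sw sv s) *\<^sub>v v = \<mu> \<cdot>\<^sub>v v"
    using ev unfolding eigenvector_def by auto
  define u where "u = K *\<^sub>v (cmat (G sw sv) *\<^sub>v v)"
  have du: "dim_vec u = r" unfolding u_def using dK by simp
  define z where "z = cadj K *\<^sub>v (cmat R *\<^sub>v (cmat Wh *\<^sub>v (cmat Wh *\<^sub>v (cmat (transpose_mat R) *\<^sub>v u))))"
  have dz: "dim_vec z = r" unfolding z_def using dK by simp
  have Ez: "cmat (transpose_mat (G sw sv)) *\<^sub>v z = \<mu> \<cdot>\<^sub>v v"
    using evq unfolding PP_adj_vec[OF Kc(1) dv] z_def u_def K_def .
  have inner: "cmat R *\<^sub>v (cmat Wh *\<^sub>v (cmat Wh *\<^sub>v (cmat (transpose_mat R) *\<^sub>v u))) = cA *\<^sub>v u"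
    using du by (simp add: WhWh_vec cA_vec)
  have XHK: "cadj (Xs s) * cadj K = 1\<^sub>m r"
    using Kc(3) unfolding K_def[symmetric] by (metis cadj_mult' cadj_one dK(2) Xs_dims(1))
  have XK: "Xs s * K = 1\<^sub>m r" using Kc(2) unfolding K_def .
  have Ez2: "cadj (Xs s) *\<^sub>v z = cA *\<^sub>v u"
  proof -
    have "cadj (Xs s) *\<^sub>v z = (cadj (Xs s) * cadj K) *\<^sub>v (cA *\<^sub>v u)"
      unfolding z_def inner using dK du by (simp add: mv_assoc)
    thus ?thesis unfolding XHK using du by (simp add: mv_one)
  qed
  have Eu: "Xs s *\<^sub>v u = cmat (G sw sv) *\<^sub>v v"
  proof -
    have "Xs s *\<^sub>v u = (Xs s * K) *\<^sub>v (cmat (G sw sv) *\<^sub>v v)"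
      unfolding u_def using dK dv by (simp add: mv_assoc)
    thus ?thesis unfolding XK using dv by (simp add: mv_one)
  qed
  define y where "y = cL *\<^sub>v z"
  have dy: "dim_vec y = r" unfolding y_def by simp
  have cadjXs_vec: "cadj (Xs s) *\<^sub>v z = cnj s \<cdot>\<^sub>v z + cA *\<^sub>v y"
    unfolding cadj_Xs y_def using dz by (simp add: mv_add_l mv_smult_l mv_one cMt_vec)
  have E1: "cnj s \<cdot>\<^sub>v y + cM *\<^sub>v y = cM *\<^sub>v u"
  proof -
    have "cL *\<^sub>v (cnj s \<cdot>\<^sub>v z + cA *\<^sub>v y) = cL *\<^sub>v (cA *\<^sub>v u)"
      using Ez2 unfolding cadjXs_vec by simp
    thus ?thesis using dz dy du by (simp add: mv_add_r mv_smult_r cM_vec y_def)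
  qed
  have E2: "complex_of_real (sw * sw) \<cdot>\<^sub>v y + complex_of_real (sv * sv) \<cdot>\<^sub>v (cM *\<^sub>v y)
      = \<mu> \<cdot>\<^sub>v (s \<cdot>\<^sub>v u + cM *\<^sub>v u)"
  proof -
    have "cmat (G sw sv) *\<^sub>v (cmat (transpose_mat (G sw sv)) *\<^sub>v z) = \<mu> \<cdot>\<^sub>v (cmat (G sw sv) *\<^sub>v v)"
      unfolding Ez using dv by (simp add: mv_smult_r)
    thus ?thesis unfolding GGt_vec[OF dz] Eu[symmetric] Xs_vec[OF du] using dy
      by (simp add: cM_vec y_def)
  qed
  have E1': "cnj s \<cdot>\<^sub>v (cM *\<^sub>v y) + cM *\<^sub>v (cM *\<^sub>v y) = cM *\<^sub>v (cM *\<^sub>v u)"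
  proof -
    have "cM *\<^sub>v (cnj s \<cdot>\<^sub>v y + cM *\<^sub>v y) = cM *\<^sub>v (cM *\<^sub>v u)" unfolding E1 ..
    thus ?thesis using dy by (simp add: mv_add_r mv_smult_r)
  qed
  have E2': "complex_of_real (sw * sw) \<cdot>\<^sub>v (cM *\<^sub>v y) + complex_of_real (sv * sv) \<cdot>\<^sub>v (cM *\<^sub>v (cM *\<^sub>v y))
      = \<mu> \<cdot>\<^sub>v (s \<cdot>\<^sub>v (cM *\<^sub>v u) + cM *\<^sub>v (cM *\<^sub>v u))"
  proof -
    have "cM *\<^sub>v (complex_of_real (sw * sw) \<cdot>\<^sub>v y + complex_of_real (sv * sv) \<cdot>\<^sub>v (cM *\<^sub>v y))
      = cM *\<^sub>v (\<mu> \<cdot>\<^sub>v (s \<cdot>\<^sub>v u + cM *\<^sub>v u))" unfolding E2 ..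
    thus ?thesis using dy du by (simp add: mv_add_r mv_smult_r)
  qed
  have u0: "u \<noteq> 0\<^sub>v r"
  proof
    assume "u = 0\<^sub>v r"
    hence "z = 0\<^sub>v r" unfolding z_def using dK by (simp add: mv_zero)
    hence "\<mu> \<cdot>\<^sub>v v = 0\<^sub>v (n + m)" using Ez[symmetric] by (simp add: mv_zero)
    from smult_vec_zero_iff[OF dv mu this] v0 show False by simp
  qed
  show ?thesis
  proof (rule quad_eigen[OF cM_carrier _ u0 r_pos])
    show "u \<in> carrier_vec r" using du by (auto intro: carrier_vecI)
    fix i assume i: "i < r"
    let ?a = "(cM *\<^sub>v u) $ i" let ?b = "(cM *\<^sub>v (cM *\<^sub>v u)) $ i"
    let ?c = "(cM *\<^sub>v y) $ i" let ?d = "(cM *\<^sub>v (cM *\<^sub>v y)) $ i"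
    have e1: "cnj s * y $ i + ?c = ?a" using arg_cong[OF E1, of "\<lambda>x. x $ i"] i dy by simp
    have e1': "cnj s * ?c + ?d = ?b" using arg_cong[OF E1', of "\<lambda>x. x $ i"] i by simp
    have e2: "complex_of_real (sw * sw) * y $ i + complex_of_real (sv * sv) * ?c = \<mu> * (s * u $ i + ?a)"
      using arg_cong[OF E2, of "\<lambda>x. x $ i"] i dy du by simp
    have e2': "complex_of_real (sw * sw) * ?c + complex_of_real (sv * sv) * ?d = \<mu> * (s * ?a + ?b)"
      using arg_cong[OF E2', of "\<lambda>x. x $ i"] i by simp
    have cs: "cnj s = - s" using s by (simp add: complex_eq_iff)
    have "complex_of_real (sw * sw) * ?a + complex_of_real (sv * sv) * ?b
        = cnj s * (complex_of_real (sw * sw) * y $ i + complex_of_real (sv * sv) * ?c)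
          + (complex_of_real (sw * sw) * ?c + complex_of_real (sv * sv) * ?d)"
      unfolding e1[symmetric] e1'[symmetric] by (simp add: algebra_simps)
    also have "\<dots> = cnj s * (\<mu> * (s * u $ i + ?a)) + \<mu> * (s * ?a + ?b)" unfolding e2 e2' ..
    also have "\<dots> = \<mu> * (s * cnj s) * u $ i + \<mu> * ?b" unfolding cs by (simp add: algebra_simps)
    finally show "(complex_of_real (sv * sv) - \<mu>) * ?b + complex_of_real (sw * sw) * ?a + (- \<mu> * (s * cnj s)) * u $ i = 0"
      by (simp add: algebra_simps)
  qed
qed


abbreviation "gv sw sv \<tau> \<equiv> sw * sw / \<tau> + sv * sv"
abbreviation "lam sw sv \<equiv> Max ((\<lambda>t. gv sw sv (Re t)) ` spectrum cM)"

lemma spec_fin: "finite (spectrum cM)" using card_finite_spectrum(1)[OF cM_carrier] .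
lemma spec_ne: "spectrum cM \<noteq> {}" using spectrum_non_empty[OF cM_carrier r_pos] .

lemma lam_ge: "eigenvalue cM t \<Longrightarrow> gv sw sv (Re t) \<le> lam sw sv"
  using spec_fin by (intro Max_ge) (auto simp: spectrum_def)

lemma lam_att: "\<exists>t. eigenvalue cM t \<and> lam sw sv = gv sw sv (Re t)"
proof -
  have "lam sw sv \<in> (\<lambda>t. gv sw sv (Re t)) ` spectrum cM"
    using spec_fin spec_ne by (intro Max_in) auto
  thus ?thesis by (auto simp: spectrum_def)
qed

lemma gv_nonneg: "eigenvalue cM t \<Longrightarrow> 0 \<le> gv sw sv (Re t)"
  using M_eig[of t] by auto

lemma lam_nonneg: "0 \<le> lam sw sv"
  using lam_att[of sw sv] gv_nonneg by metis

lemma bound: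
  assumes s: "Re s = 0" and ev: "eigenvalue (cadj (PP sw sv s) * PP sw sv s) \<mu>"
  shows "Re \<mu> \<le> lam sw sv"
proof (cases "\<mu> = 0")
  case True thus ?thesis using lam_nonneg by simp
next
  case False
  from ev obtain v where v: "eigenvector (cadj (PP sw sv s) * PP sw sv s) v \<mu>" unfolding eigenvalue_def by auto
  from bound_core[OF s v False] obtain t where t: "eigenvalue cM t"
    and eq: "(complex_of_real (sv * sv) - \<mu>) * t^2 + complex_of_real (sw * sw) * t + (- \<mu> * (s * cnj s)) = 0" by auto
  define \<tau> where "\<tau> = Re t"
  have tau: "t = complex_of_real \<tau>" "\<tau> > 0" using M_eig[OF t] unfolding \<tau>_def by (auto simp: complex_eq_iff)
  define o2 where "o2 = (cmod s)^2"
  have so: "s * cnj s = complex_of_real o2" unfolding o2_def by (rule sym, rule complex_norm_square)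
  have o2: "o2 \<ge> 0" unfolding o2_def by simp
  have "\<mu> * complex_of_real (\<tau>^2 + o2) = complex_of_real (sv * sv * \<tau>^2 + sw * sw * \<tau>)"
    using eq unfolding tau(1) so by (simp add: algebra_simps)
  hence h: "\<mu> * complex_of_real (\<tau>^2 + o2) = complex_of_real (sv * sv * \<tau>^2 + sw * sw * \<tau>)" .
  have Dn: "complex_of_real (\<tau>^2 + o2) \<noteq> 0" using tau(2) o2 
    by (metis add_pos_nonneg of_real_eq_0_iff less_irrefl zero_less_power)
  have "\<mu> = complex_of_real (sv * sv * \<tau>^2 + sw * sw * \<tau>) / complex_of_real (\<tau>^2 + o2)"
    using Dn h by (metis nonzero_mult_div_cancel_right)
  hence mu: "\<mu> = complex_of_real ((sv * sv * \<tau>^2 + sw * sw * \<tau>) / (\<tau>^2 + o2))"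
    by (simp only: of_real_divide)
  have "(sv * sv * \<tau>^2 + sw * sw * \<tau>) / (\<tau>^2 + o2) \<le> (sv * sv * \<tau>^2 + sw * sw * \<tau>) / \<tau>^2"
  proof (rule divide_left_mono)
    show "0 \<le> sv * sv * \<tau>^2 + sw * sw * \<tau>" by (intro add_nonneg_nonneg mult_nonneg_nonneg[OF zero_le_square]) (use tau(2) in auto)
    show "\<tau>^2 \<le> \<tau>^2 + o2" using o2 by simp
    show "0 < (\<tau>^2 + o2) * \<tau>^2" using tau(2) o2 by (intro mult_pos_pos add_pos_nonneg) auto
  qed
  also have "\<dots> = gv sw sv \<tau>" using tau(2) by (simp add: field_simps power2_eq_square)
  also have "\<dots> \<le> lam sw sv" using lam_ge[OF t] unfolding \<tau>_def .
  finally show ?thesis unfolding mu by simp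
qed


lemma vec_eqI': "dim_vec a = k \<Longrightarrow> dim_vec b = k \<Longrightarrow> (\<And>i. i < k \<Longrightarrow> a $ i = b $ i) \<Longrightarrow> a = b"
  by (intro eq_vecI) auto

lemma G00_vec: "dim_vec v = n + m \<Longrightarrow> cmat (G 0 0) *\<^sub>v v = 0\<^sub>v r"
  by (intro eq_vecI) (auto simp: scalar_prod_def hcat_def cmat_def intro!: sum.neutral)

lemma attain0: "eigenvalue (cadj (PP sw sv 0) * PP sw sv 0) (complex_of_real (lam sw sv))"
proof -
  have re0: "Re (0::complex) = 0" by simp
  note Kc = Xs_inv[OF re0]
  define K where "K = minv (Xs 0)"
  have dK: "dim_row K = r" "dim_col K = r" using Kc(1) unfolding K_def by auto
  obtain t0 where t0: "eigenvalue cM t0" and lt: "lam sw sv = gv sw sv (Re t0)" using lam_att by blast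
  define \<tau> where "\<tau> = Re t0"
  have tau: "t0 = complex_of_real \<tau>" "\<tau> > 0" using M_eig[OF t0] unfolding \<tau>_def by (auto simp: complex_eq_iff)
  show ?thesis
  proof (cases "lam sw sv = 0")
    case True
    hence "sw * sw / \<tau> + sv * sv = 0" using lt unfolding \<tau>_def by simp
    moreover have "0 \<le> sw * sw / \<tau>" "0 \<le> sv * sv" using tau(2) by auto
    ultimately have "sw * sw = 0" "sv * sv = 0" using tau(2) by (auto simp: add_nonneg_eq_0_iff)
    hence sw: "sw = 0" and sv: "sv = 0" by auto
    define e where "e = (unit_vec (n + m) 0 :: complex vec)"
    have de: "dim_vec e = n + m" unfolding e_def by simp
    have e0: "e \<noteq> 0\<^sub>v (n + m)"
    proof
      assume "e = 0\<^sub>v (n + m)"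
      hence "e $ 0 = 0" using n2 by simp
      thus False unfolding e_def using n2 by simp
    qed
    have "(cadj (PP sw sv 0) * PP sw sv 0) *\<^sub>v e = 0\<^sub>v (n + m)"
      unfolding PP_adj_vec[OF Kc(1) de] sw sv G00_vec[OF de] using dK unfolding K_def[symmetric]
      by (simp add: mv_zero)
    hence "eigenvector (cadj (PP sw sv 0) * PP sw sv 0) e 0" unfolding eigenvector_def using de e0
      by (auto intro!: carrier_vecI)
    thus ?thesis unfolding True eigenvalue_def by auto
  next
    case False
    define g where "g = complex_of_real (lam sw sv)"
    have g0: "g \<noteq> 0" unfolding g_def using False by simp
    obtain x where x: "x \<in> carrier_vec r" "x \<noteq> 0\<^sub>v r" "cM *\<^sub>v x = t0 \<cdot>\<^sub>v x"
      using t0 unfolding eigenvalue_def eigenvector_def by auto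
    have dx: "dim_vec x = r" using x by auto
    have Lc: "cL \<in> carrier_mat r r" by (rule carrier_matI) simp_all
    note KL = minv_props[OF Lc L_inj_c]
    define z where "z = minv cL *\<^sub>v x"
    have dz: "dim_vec z = r" unfolding z_def using KL(1) by auto
    have Lz: "cL *\<^sub>v z = x"
    proof -
      have "cL *\<^sub>v z = (cL * minv cL) *\<^sub>v x" unfolding z_def using KL(1) dx by (simp add: mv_assoc)
      thus ?thesis using KL(2) dx by (simp add: mv_one)
    qed
    define v where "v = cmat (transpose_mat (G sw sv)) *\<^sub>v z"
    have dv: "dim_vec v = n + m" unfolding v_def by simp
    define c where "c = complex_of_real (sw * sw) + complex_of_real (sv * sv) * t0"
    have Gv: "cmat (G sw sv) *\<^sub>v v = c \<cdot>\<^sub>v x"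
    proof -
      have "cmat (G sw sv) *\<^sub>v v = complex_of_real (sw * sw) \<cdot>\<^sub>v x + complex_of_real (sv * sv) \<cdot>\<^sub>v (t0 \<cdot>\<^sub>v x)"
        unfolding v_def GGt_vec[OF dz] Lz cM_vec[OF dx, symmetric] x(3) ..
      also have "\<dots> = c \<cdot>\<^sub>v x" unfolding c_def using dx by (intro vec_eqI') (auto simp: algebra_simps)
      finally show ?thesis .
    qed
    have ct: "c = g * t0" unfolding c_def g_def lt tau(1) using tau(2) by (simp add: field_simps)
    have t00: "t0 \<noteq> 0" using tau by auto
    have Kx: "K *\<^sub>v (c \<cdot>\<^sub>v x) = g \<cdot>\<^sub>v x"
    proof -
      have "Xs 0 *\<^sub>v (g \<cdot>\<^sub>v x) = 0 \<cdot>\<^sub>v (g \<cdot>\<^sub>v x) + cM *\<^sub>v (g \<cdot>\<^sub>v x)" by (rule Xs_vec) (simp add: dx)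
      also have "cM *\<^sub>v (g \<cdot>\<^sub>v x) = g \<cdot>\<^sub>v (t0 \<cdot>\<^sub>v x)" using dx x(3) by (simp add: mv_smult_r)
      also have "0 \<cdot>\<^sub>v (g \<cdot>\<^sub>v x) + g \<cdot>\<^sub>v (t0 \<cdot>\<^sub>v x) = c \<cdot>\<^sub>v x" unfolding ct using dx by (intro vec_eqI') auto
      finally have "Xs 0 *\<^sub>v (g \<cdot>\<^sub>v x) = c \<cdot>\<^sub>v x" .
      hence "K *\<^sub>v (c \<cdot>\<^sub>v x) = (K * Xs 0) *\<^sub>v (g \<cdot>\<^sub>v x)" using dK dx by (simp add: mv_assoc)
      thus ?thesis using Kc(3) unfolding K_def[symmetric] using dx by (simp add: mv_one)
    qed
    have XHz: "cadj (Xs 0) *\<^sub>v z = cA *\<^sub>v x"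
    proof -
      have "cadj (Xs 0) *\<^sub>v z = 0 \<cdot>\<^sub>v z + cA *\<^sub>v x"
        unfolding cadj_Xs using dz by (simp add: mv_add_l mv_smult_l mv_one cMt_vec Lz)
      also have "\<dots> = cA *\<^sub>v x" using dz by (intro vec_eqI') auto
      finally show ?thesis .
    qed
    have KHX: "cadj K * cadj (Xs 0) = 1\<^sub>m r"
      using Kc(2) unfolding K_def[symmetric] by (metis cadj_mult' cadj_one dK(1) Xs_dims(2))
    have KHAx: "cadj K *\<^sub>v (cA *\<^sub>v x) = z"
    proof -
      have "cadj K *\<^sub>v (cA *\<^sub>v x) = (cadj K * cadj (Xs 0)) *\<^sub>v z" unfolding XHz[symmetric] using dK dz
        by (simp add: mv_assoc)
      thus ?thesis unfolding KHX using dz by (simp add: mv_one)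
    qed
    have "(cadj (PP sw sv 0) * PP sw sv 0) *\<^sub>v v =
      cmat (transpose_mat (G sw sv)) *\<^sub>v (cadj K *\<^sub>v (cA *\<^sub>v (g \<cdot>\<^sub>v x)))"
      unfolding PP_adj_vec[OF Kc(1) dv] unfolding K_def[symmetric] Gv Kx using dx by (simp add: WhWh_vec cA_vec)
    also have "\<dots> = g \<cdot>\<^sub>v v" unfolding v_def KHAx[symmetric] using dx dK by (simp add: mv_smult_r)
    finally have ev: "(cadj (PP sw sv 0) * PP sw sv 0) *\<^sub>v v = g \<cdot>\<^sub>v v" .
    have v0: "v \<noteq> 0\<^sub>v (n + m)"
    proof
      assume "v = 0\<^sub>v (n + m)"
      hence "c \<cdot>\<^sub>v x = 0\<^sub>v r" using Gv[symmetric] by (simp add: mv_zero)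
      moreover have "c \<noteq> 0" using ct g0 t00 by simp
      ultimately show False using smult_vec_zero_iff[OF dx] x(2) by blast
    qed
    have "eigenvector (cadj (PP sw sv 0) * PP sw sv 0) v g" unfolding eigenvector_def using ev v0 dv
      by (auto intro!: carrier_vecI)
    thus ?thesis unfolding g_def eigenvalue_def by auto
  qed
qed


lemma PP_carrier: "cadj (PP sw sv s) * PP sw sv s \<in> carrier_mat (n + m) (n + m)"
  by (rule carrier_matI) simp_all

lemma LHS: "hinf_norm (\<lambda>s. PP sw sv s) = sqrt (lam sw sv)"
proof -
  have nm: "n + m > 0" using n2 by simp
  have le: "sigma_max (PP sw sv (\<i> * complex_of_real \<omega>)) \<le> sqrt (lam sw sv)" for \<omega>
    unfolding sigma_max_def
    by (intro real_sqrt_le_mono maxS_le[OF PP_carrier nm] bound) auto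
  have eq: "sigma_max (PP sw sv (\<i> * complex_of_real 0)) = sqrt (lam sw sv)"
    unfolding sigma_max_def
    by (simp only: mult_zero_right of_real_0, subst maxS_eq[OF PP_carrier nm bound attain0]) auto
  show ?thesis unfolding hinf_norm_def
    by (rule cSup_eq_maximum) (use le eq in \<open>auto intro!: image_eqI[of _ _ 0]\<close>)
qed


abbreviation "ALA \<equiv> R * Wd * transpose_mat R * L * R * Wd * transpose_mat R"
abbreviation "Xm \<equiv> Wh * transpose_mat R * minv ALA * R * Wh"
abbreviation "Ym \<equiv> Wh * transpose_mat R * minv A * R * Wh"
abbreviation "Sm sw sv \<equiv> sw\<^sup>2 \<cdot>\<^sub>m Xm + sv\<^sup>2 \<cdot>\<^sub>m Ym"

lemma ALA_carrier: "ALA \<in> carrier_mat r r" by (rule carrier_matI) simp_all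

lemma ALA_vec: "dim_vec y = r \<Longrightarrow> cmat ALA *\<^sub>v y = cA *\<^sub>v (cM *\<^sub>v y)"
  by (simp add: cmat_mult' mv_assoc)

lemma A_inj_c': "y \<in> carrier_vec r \<Longrightarrow> cA *\<^sub>v y = 0\<^sub>v r \<Longrightarrow> y = 0\<^sub>v r" by (rule A_inj_c)

lemma ALA_inj_c: assumes y: "y \<in> carrier_vec r" and z: "cmat ALA *\<^sub>v y = 0\<^sub>v r" shows "y = 0\<^sub>v r"
proof -
  have dy: "dim_vec y = r" using y by auto
  have "cA *\<^sub>v (cM *\<^sub>v y) = 0\<^sub>v r" using z ALA_vec[OF dy] by simp
  hence "cM *\<^sub>v y = 0\<^sub>v r" by (rule A_inj_c[rotated]) (rule carrier_vecI, simp)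
  thus ?thesis by (rule M_inj[OF dy])
qed

lemma A_carrier': "A \<in> carrier_mat r r" by (rule A_carrier)

lemma minvA: "minv A \<in> carrier_mat r r" "A * minv A = 1\<^sub>m r" "minv A * A = 1\<^sub>m r"
  using minv_props[OF A_carrier' real_inj_from_complex[OF A_carrier' A_inj_c]] by auto

lemma minvALA: "minv ALA \<in> carrier_mat r r" "ALA * minv ALA = 1\<^sub>m r" "minv ALA * ALA = 1\<^sub>m r"
  using minv_props[OF ALA_carrier real_inj_from_complex[OF ALA_carrier ALA_inj_c]] by auto

lemma minv_dims[simp]: "dim_row (minv A) = r" "dim_col (minv A) = r" "dim_row (minv ALA) = r" "dim_col (minv ALA) = r"
  using minvA(1) minvALA(1) by auto

abbreviation "K1 \<equiv> cmat (minv ALA)"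
abbreviation "K2 \<equiv> cmat (minv A)"

lemma K2A: "dim_vec x = r \<Longrightarrow> K2 *\<^sub>v (cA *\<^sub>v x) = x"
proof -
  assume x: "dim_vec x = r"
  have "K2 *\<^sub>v (cA *\<^sub>v x) = cmat (minv A * A) *\<^sub>v x" using x by (simp add: cmat_mult' mv_assoc del: A_carrier)
  thus ?thesis unfolding minvA(3) cmat_one using x by (simp add: mv_one)
qed

lemma ALAK1: "dim_vec y = r \<Longrightarrow> cmat ALA *\<^sub>v (K1 *\<^sub>v y) = y"
proof -
  assume y: "dim_vec y = r"
  have "cmat ALA *\<^sub>v (K1 *\<^sub>v y) = cmat (ALA * minv ALA) *\<^sub>v y"
  proof -
    have "cmat (ALA * minv ALA) = cmat ALA * K1" by (rule cmat_mult') simp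
    thus ?thesis using y by (simp only: mv_assoc) (simp add: mv_assoc)
  qed
  thus ?thesis unfolding minvALA(2) cmat_one using y by (simp add: mv_one)
qed

lemma MK1A: "dim_vec x = r \<Longrightarrow> cM *\<^sub>v (K1 *\<^sub>v (cA *\<^sub>v x)) = x"
proof -
  assume x: "dim_vec x = r"
  have e: "cA *\<^sub>v (cM *\<^sub>v (K1 *\<^sub>v (cA *\<^sub>v x))) = cA *\<^sub>v x"
    using ALAK1[of "cA *\<^sub>v x"] ALA_vec[of "K1 *\<^sub>v (cA *\<^sub>v x)"] x by simp
  show ?thesis by (rule inj_diff[OF A_inj_c' cmat_carrier[OF A_carrier'] _ _ e]) (use x in simp_all)
qed


abbreviation "qv sw sv p \<equiv> complex_of_real (sw\<^sup>2) \<cdot>\<^sub>v (K1 *\<^sub>v p) + complex_of_real (sv\<^sup>2) \<cdot>\<^sub>v (K2 *\<^sub>v p)"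

lemma S_vec: "dim_vec v = m \<Longrightarrow>
  cmat (Sm sw sv) *\<^sub>v v = cmat Wh *\<^sub>v (cmat (transpose_mat R) *\<^sub>v (qv sw sv (cmat R *\<^sub>v (cmat Wh *\<^sub>v v))))"
  by (simp add: cmat_add cmat_smult mv_add_l mv_smult_l cmat_mult' mv_assoc mv_add_r mv_smult_r del: of_real_power)

lemma MQ: "dim_vec x = r \<Longrightarrow>
  cM *\<^sub>v (qv sw sv (cA *\<^sub>v x)) = complex_of_real (sw\<^sup>2) \<cdot>\<^sub>v x + complex_of_real (sv\<^sup>2) \<cdot>\<^sub>v (cM *\<^sub>v x)"
  by (simp add: K2A MK1A mv_add_r mv_smult_r del: of_real_power)

lemma ALA_sym: "transpose_mat ALA = ALA"
  by (simp add: transpose_mult' mm_assoc L_sym)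

lemma Sm_sym_gen:
  assumes "K \<in> carrier_mat r r" "K' \<in> carrier_mat r r" "transpose_mat K = K" "transpose_mat K' = K'"
  shows "transpose_mat (a \<cdot>\<^sub>m (Wh * transpose_mat R * K * R * Wh) + b \<cdot>\<^sub>m (Wh * transpose_mat R * K' * R * Wh))
       = a \<cdot>\<^sub>m (Wh * transpose_mat R * K * R * Wh) + b \<cdot>\<^sub>m (Wh * transpose_mat R * K' * R * Wh)"
  using assms by (subst transpose_lin) (simp_all add: transpose_mult' mm_assoc)

lemma Sm_sym: "transpose_mat (Sm sw sv) = Sm sw sv"
proof -
  have s1: "transpose_mat (minv ALA) = minv ALA" by (rule minv_sym[OF ALA_carrier ALA_sym minvALA(1,2)])
  have s2: "transpose_mat (minv A) = minv A" by (rule minv_sym[OF A_carrier' A_sym minvA(1,2)])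
  show ?thesis by (rule Sm_sym_gen[OF minvALA(1) minvA(1) s1 s2])
qed


abbreviation "cS sw sv \<equiv> cmat (Sm sw sv)"

lemma Sm_dims[simp]: "dim_row (Sm sw sv) = m" "dim_col (Sm sw sv) = m" by simp_all

lemma SS_vec: "dim_vec v = m \<Longrightarrow> (cadj (cS sw sv) * cS sw sv) *\<^sub>v v = cS sw sv *\<^sub>v (cS sw sv *\<^sub>v v)"
  unfolding cadj_cmat Sm_sym by (simp add: mv_assoc)

lemma M_inj': "y \<in> carrier_vec r \<Longrightarrow> cM *\<^sub>v y = 0\<^sub>v r \<Longrightarrow> y = 0\<^sub>v r"
  by (rule M_inj) auto

lemma qv_smult: "dim_vec p = r \<Longrightarrow> qv sw sv (c \<cdot>\<^sub>v p) = c \<cdot>\<^sub>v qv sw sv p"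
  by (intro vec_eqI') (auto simp: mv_smult_r algebra_simps)

lemma RWWR: "dim_vec a = r \<Longrightarrow> cmat R *\<^sub>v (cmat Wh *\<^sub>v (cmat Wh *\<^sub>v (cmat (transpose_mat R) *\<^sub>v a))) = cA *\<^sub>v a"
  by (simp add: WhWh_vec cA_vec)

lemma RHS_core:
  assumes ev: "eigenvector (cadj (cS sw sv) * cS sw sv) v \<mu>" and mu: "\<mu> \<noteq> 0"
  shows "\<exists>t. eigenvalue cM t \<and> (complex_of_real (sv\<^sup>2) * complex_of_real (sv\<^sup>2) - \<mu>) * t^2
     + (2 * complex_of_real (sw\<^sup>2) * complex_of_real (sv\<^sup>2)) * t + complex_of_real (sw\<^sup>2) * complex_of_real (sw\<^sup>2) = 0"
proof -
  let ?a = "complex_of_real (sw\<^sup>2)" let ?b = "complex_of_real (sv\<^sup>2)"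
  have dv: "dim_vec v = m" and v0: "v \<noteq> 0\<^sub>v m" and evq: "cS sw sv *\<^sub>v (cS sw sv *\<^sub>v v) = \<mu> \<cdot>\<^sub>v v"
    using ev SS_vec unfolding eigenvector_def by auto
  define p where "p = cmat R *\<^sub>v (cmat Wh *\<^sub>v v)"
  have dp: "dim_vec p = r" unfolding p_def by simp
  define a where "a = qv sw sv p"
  have da: "dim_vec a = r" unfolding a_def using dp by simp
  have Sv: "cS sw sv *\<^sub>v v = cmat Wh *\<^sub>v (cmat (transpose_mat R) *\<^sub>v a)" unfolding a_def p_def by (rule S_vec[OF dv])
  define b where "b = qv sw sv (cA *\<^sub>v a)"
  have db: "dim_vec b = r" unfolding b_def by simp
  have SSv: "cS sw sv *\<^sub>v (cS sw sv *\<^sub>v v) = cmat Wh *\<^sub>v (cmat (transpose_mat R) *\<^sub>v b)"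
    unfolding Sv b_def by (subst S_vec) (simp_all add: RWWR da)
  have Ab: "cA *\<^sub>v b = \<mu> \<cdot>\<^sub>v p"
  proof -
    have "cmat R *\<^sub>v (cmat Wh *\<^sub>v (cmat Wh *\<^sub>v (cmat (transpose_mat R) *\<^sub>v b))) = cmat R *\<^sub>v (cmat Wh *\<^sub>v (\<mu> \<cdot>\<^sub>v v))"
      using evq unfolding SSv by simp
    thus ?thesis unfolding RWWR[OF db] p_def using dv by (simp add: mv_smult_r)
  qed
  have star: "qv sw sv (cA *\<^sub>v b) = \<mu> \<cdot>\<^sub>v a" unfolding Ab a_def by (rule qv_smult[OF dp])
  have e1: "cM *\<^sub>v b = ?a \<cdot>\<^sub>v a + ?b \<cdot>\<^sub>v (cM *\<^sub>v a)" unfolding b_def by (rule MQ[OF da])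
  have e2: "?a \<cdot>\<^sub>v b + ?b \<cdot>\<^sub>v (cM *\<^sub>v b) = \<mu> \<cdot>\<^sub>v (cM *\<^sub>v a)"
    using MQ[OF db, of sw sv] unfolding star using da by (simp add: mv_smult_r)
  have e3: "?a \<cdot>\<^sub>v (cM *\<^sub>v b) + ?b \<cdot>\<^sub>v (cM *\<^sub>v (cM *\<^sub>v b)) = \<mu> \<cdot>\<^sub>v (cM *\<^sub>v (cM *\<^sub>v a))"
  proof -
    have "cM *\<^sub>v (?a \<cdot>\<^sub>v b + ?b \<cdot>\<^sub>v (cM *\<^sub>v b)) = cM *\<^sub>v (\<mu> \<cdot>\<^sub>v (cM *\<^sub>v a))" unfolding e2 ..
    thus ?thesis using db da by (simp add: mv_add_r mv_smult_r)
  qed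
  have e4: "cM *\<^sub>v (cM *\<^sub>v b) = ?a \<cdot>\<^sub>v (cM *\<^sub>v a) + ?b \<cdot>\<^sub>v (cM *\<^sub>v (cM *\<^sub>v a))"
    unfolding e1 using da by (simp add: mv_add_r mv_smult_r)
  have a0: "a \<noteq> 0\<^sub>v r"
  proof
    assume "a = 0\<^sub>v r"
    hence "cS sw sv *\<^sub>v v = 0\<^sub>v m" unfolding Sv by (simp add: mv_zero)
    hence "\<mu> \<cdot>\<^sub>v v = 0\<^sub>v m" using evq by (simp add: mv_zero)
    from smult_vec_zero_iff[OF dv mu this] v0 show False by simp
  qed
  show ?thesis
  proof (rule quad_eigen[OF cM_carrier _ a0 r_pos])
    show "a \<in> carrier_vec r" using da by (auto intro: carrier_vecI)
    fix i assume i: "i < r"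
    let ?a1 = "(cM *\<^sub>v a) $ i" let ?a2 = "(cM *\<^sub>v (cM *\<^sub>v a)) $ i"
    let ?b1 = "(cM *\<^sub>v b) $ i" let ?b2 = "(cM *\<^sub>v (cM *\<^sub>v b)) $ i"
    have f1: "?b1 = ?a * a $ i + ?b * ?a1" using arg_cong[OF e1, of "\<lambda>x. x $ i"] i da by simp
    have f3: "?a * ?b1 + ?b * ?b2 = \<mu> * ?a2" using arg_cong[OF e3, of "\<lambda>x. x $ i"] i by simp
    have f4: "?b2 = ?a * ?a1 + ?b * ?a2" using arg_cong[OF e4, of "\<lambda>x. x $ i"] i by simp
    have "\<mu> * ?a2 = ?a * (?a * a $ i + ?b * ?a1) + ?b * (?a * ?a1 + ?b * ?a2)"
      unfolding f3[symmetric] f1[symmetric] f4[symmetric] ..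
    thus "(?b * ?b - \<mu>) * ?a2 + (2 * ?a * ?b) * ?a1 + ?a * ?a * a $ i = 0"
      by (simp add: algebra_simps)
  qed
qed


lemma RHS_bound: assumes ev: "eigenvalue (cadj (cS sw sv) * cS sw sv) \<mu>" shows "Re \<mu> \<le> (lam sw sv)\<^sup>2"
proof (cases "\<mu> = 0")
  case True thus ?thesis by simp
next
  case False
  from ev obtain v where v: "eigenvector (cadj (cS sw sv) * cS sw sv) v \<mu>" unfolding eigenvalue_def by auto
  from RHS_core[OF v False] obtain t where t: "eigenvalue cM t"
    and eq: "(complex_of_real (sv\<^sup>2) * complex_of_real (sv\<^sup>2) - \<mu>) * t^2
     + (2 * complex_of_real (sw\<^sup>2) * complex_of_real (sv\<^sup>2)) * t + complex_of_real (sw\<^sup>2) * complex_of_real (sw\<^sup>2) = 0"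
    by blast
  define \<tau> where "\<tau> = Re t"
  have tau: "t = complex_of_real \<tau>" "\<tau> > 0" using M_eig[OF t] unfolding \<tau>_def by (auto simp: complex_eq_iff)
  have "\<mu> * complex_of_real (\<tau>^2) = complex_of_real ((sv\<^sup>2 * \<tau> + sw\<^sup>2)^2)"
    using eq unfolding tau(1) by (simp add: algebra_simps power2_eq_square)
  hence "\<mu> = complex_of_real ((sv\<^sup>2 * \<tau> + sw\<^sup>2)^2) / complex_of_real (\<tau>^2)"
    using tau(2) by (metis nonzero_mult_div_cancel_right of_real_eq_0_iff power_not_zero less_irrefl)
  also have "\<dots> = complex_of_real ((gv sw sv \<tau>)^2)"
    unfolding of_real_divide[symmetric] using tau(2) by (simp add: field_simps power2_eq_square)
  finally have mu: "\<mu> = complex_of_real ((gv sw sv \<tau>)^2)" .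
  have h0: "0 \<le> gv sw sv \<tau>" using gv_nonneg[OF t] unfolding \<tau>_def .
  have h1: "gv sw sv \<tau> \<le> lam sw sv" using lam_ge[OF t] unfolding \<tau>_def .
  have "(gv sw sv \<tau>)^2 \<le> (lam sw sv)^2" by (rule power_mono[OF h1 h0])
  thus ?thesis unfolding mu by simp
qed

lemma RHS_attain: "eigenvalue (cadj (cS sw sv) * cS sw sv) (complex_of_real ((lam sw sv)\<^sup>2))"
proof -
  obtain t0 where t0: "eigenvalue cM t0" and lt: "lam sw sv = gv sw sv (Re t0)" using lam_att by blast
  define \<tau> where "\<tau> = Re t0"
  have tau: "t0 = complex_of_real \<tau>" "\<tau> > 0" using M_eig[OF t0] unfolding \<tau>_def by (auto simp: complex_eq_iff)
  obtain x where x: "x \<in> carrier_vec r" "x \<noteq> 0\<^sub>v r" "cM *\<^sub>v x = t0 \<cdot>\<^sub>v x"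
    using t0 unfolding eigenvalue_def eigenvector_def by auto
  have dx: "dim_vec x = r" using x by auto
  define g where "g = complex_of_real (lam sw sv)"
  have gt: "g * t0 = complex_of_real (sw\<^sup>2) + complex_of_real (sv\<^sup>2) * t0"
    unfolding g_def lt tau(1) \<tau>_def[symmetric] using tau(2) by (simp add: field_simps power2_eq_square)
  have qAx: "qv sw sv (cA *\<^sub>v x) = g \<cdot>\<^sub>v x"
  proof (rule inj_diff[OF M_inj' cM_carrier])
    show "dim_vec (qv sw sv (cA *\<^sub>v x)) = r" by simp
    show "dim_vec (g \<cdot>\<^sub>v x) = r" using dx by simp
    have "cM *\<^sub>v (qv sw sv (cA *\<^sub>v x)) = complex_of_real (sw\<^sup>2) \<cdot>\<^sub>v x + complex_of_real (sv\<^sup>2) \<cdot>\<^sub>v (t0 \<cdot>\<^sub>v x)"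
      unfolding MQ[OF dx] x(3) ..
    also have "\<dots> = g \<cdot>\<^sub>v (t0 \<cdot>\<^sub>v x)"
    proof (rule vec_eqI'[of _ r])
      fix i assume i: "i < r"
      have "(g * t0) * x $ i = complex_of_real (sw\<^sup>2) * x $ i + complex_of_real (sv\<^sup>2) * (t0 * x $ i)"
        unfolding gt by (simp only: algebra_simps)
      thus "(complex_of_real (sw\<^sup>2) \<cdot>\<^sub>v x + complex_of_real (sv\<^sup>2) \<cdot>\<^sub>v (t0 \<cdot>\<^sub>v x)) $ i = (g \<cdot>\<^sub>v (t0 \<cdot>\<^sub>v x)) $ i"
        using i dx by (simp del: of_real_power add: mult.assoc)
    qed (use dx in simp_all)
    also have "\<dots> = cM *\<^sub>v (g \<cdot>\<^sub>v x)" using dx x(3) by (simp add: mv_smult_r)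
    finally show "cM *\<^sub>v (qv sw sv (cA *\<^sub>v x)) = cM *\<^sub>v (g \<cdot>\<^sub>v x)" .
  qed
  define v where "v = cmat Wh *\<^sub>v (cmat (transpose_mat R) *\<^sub>v x)"
  have dv: "dim_vec v = m" unfolding v_def by simp
  have Sv: "cS sw sv *\<^sub>v v = g \<cdot>\<^sub>v v"
    unfolding S_vec[OF dv] unfolding v_def RWWR[OF dx] qAx using dx by (simp add: mv_smult_r)
  have SSv: "(cadj (cS sw sv) * cS sw sv) *\<^sub>v v = complex_of_real ((lam sw sv)\<^sup>2) \<cdot>\<^sub>v v"
  proof -
    have "cS sw sv *\<^sub>v (g \<cdot>\<^sub>v v) = g \<cdot>\<^sub>v (cS sw sv *\<^sub>v v)" by (rule mv_smult_r) (simp add: dv)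
    hence "(cadj (cS sw sv) * cS sw sv) *\<^sub>v v = g \<cdot>\<^sub>v (g \<cdot>\<^sub>v v)" unfolding SS_vec[OF dv] Sv by simp
    also have "\<dots> = (g * g) \<cdot>\<^sub>v v" using dv by (intro vec_eqI') auto
    also have "g * g = complex_of_real ((lam sw sv)\<^sup>2)" unfolding g_def by (simp add: power2_eq_square)
    finally show ?thesis .
  qed
  have v0: "v \<noteq> 0\<^sub>v m"
  proof
    assume "v = 0\<^sub>v m"
    hence "cmat R *\<^sub>v (cmat Wh *\<^sub>v v) = 0\<^sub>v r" by (simp add: mv_zero)
    hence "cA *\<^sub>v x = 0\<^sub>v r" unfolding v_def RWWR[OF dx] .
    from A_inj_c[OF x(1) this] x(2) show False by simp
  qed
  have "eigenvector (cadj (cS sw sv) * cS sw sv) v (complex_of_real ((lam sw sv)\<^sup>2))"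
    unfolding eigenvector_def using SSv v0 dv by (auto intro!: carrier_vecI)
  thus ?thesis unfolding eigenvalue_def by auto
qed

lemma RHS: "sigma_max (cS sw sv) = lam sw sv"
proof -
  have mpos: "m > 0" using mge n2 by simp
  have C: "cadj (cS sw sv) * cS sw sv \<in> carrier_mat m m" by (rule carrier_matI) simp_all
  show ?thesis unfolding sigma_max_def
    by (subst maxS_eq[OF C mpos RHS_bound RHS_attain]) (simp_all add: lam_nonneg)
qed

end


theorem lemma6:
  fixes n m :: nat and src tgt :: "nat \<Rightarrow> nat"
    and w :: "nat \<Rightarrow> real" and \<epsilon> :: "nat \<Rightarrow> real" and \<sigma>\<^sub>w \<sigma>\<^sub>v :: real
  assumes n2: "n \<ge> 2"
    and graph: "simple_graph n m src tgt"
    and conn: "connected_on n {0..<m} src tgt"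
    and mge: "n - 1 \<le> m"
    and tree: "spanning_tree n {0..<n-1} src tgt"
    and wpos: "\<forall>l<m. w l > 0"
    and epos: "\<forall>i<n. \<epsilon> i > 0"
  shows "(hinf_norm (\<lambda>s::complex.
            cmat (mat_diag m (\<lambda>l. sqrt (w l))) *
            (cmat (transpose_mat (Rmat n m src tgt)) *
             minv (s \<cdot>\<^sub>m 1\<^sub>m (n-1) + cmat (Lest n m src tgt \<epsilon> * Rmat n m src tgt * mat_diag m w
                                          * transpose_mat (Rmat n m src tgt))) *
             cmat (hcat (\<sigma>\<^sub>w \<cdot>\<^sub>m (transpose_mat (Dtau n m src tgt) * mat_diag n (\<lambda>i. 1 / sqrt (\<epsilon> i))))
                        ((- \<sigma>\<^sub>v) \<cdot>\<^sub>m (Lest n m src tgt \<epsilon> * Rmat n m src tgt * mat_diag m (\<lambda>l. sqrt (w l))))))))\<^sup>2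
         = sigma_max (cmat (
             \<sigma>\<^sub>w\<^sup>2 \<cdot>\<^sub>m (mat_diag m (\<lambda>l. sqrt (w l)) * transpose_mat (Rmat n m src tgt) *
                  minv (Rmat n m src tgt * mat_diag m w * transpose_mat (Rmat n m src tgt) * Lest n m src tgt \<epsilon>
                        * Rmat n m src tgt * mat_diag m w * transpose_mat (Rmat n m src tgt))
                  * Rmat n m src tgt * mat_diag m (\<lambda>l. sqrt (w l)))
           + \<sigma>\<^sub>v\<^sup>2 \<cdot>\<^sub>m (mat_diag m (\<lambda>l. sqrt (w l)) * transpose_mat (Rmat n m src tgt) *
                  minv (Rmat n m src tgt * mat_diag m w * transpose_mat (Rmat n m src tgt))
                  * Rmat n m src tgt * mat_diag m (\<lambda>l. sqrt (w l)))))"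
  proof -
  interpret setting n m src tgt w \<epsilon> using n2 graph mge tree wpos epos by unfold_locales
  have "hinf_norm (\<lambda>s. PP \<sigma>\<^sub>w \<sigma>\<^sub>v s) = sqrt (lam \<sigma>\<^sub>w \<sigma>\<^sub>v)" by (rule LHS)
  moreover have "sigma_max (cS \<sigma>\<^sub>w \<sigma>\<^sub>v) = lam \<sigma>\<^sub>w \<sigma>\<^sub>v" by (rule RHS)
  moreover have "0 \<le> lam \<sigma>\<^sub>w \<sigma>\<^sub>v" by (rule lam_nonneg)
  ultimately show ?thesis by simp
qed

end
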